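(* Consider the gradient flow $\frac{d}{dt}\mathbf w=-(I_d-\mathbf w\mathbf w^T)\nabla L(\mathbf w)$ started from a unit vector $\mathbf w(0)$, and let $\mathbf u(t)=V^T\mathbf w(t)\in\mathbb R^k$. Consider the regime in which $d$ is large while $k$, the matrix $A=V^TV$ and the activations $\sigma,\sigma^*$ are fixed (independent of $d$). Assume $\mathbf u_j(0)>0$ and $\mathbf u_j(0)=\Theta(d^{-1/2})$ for all $j\in[k]$, and $p^*\ge 2$. Then: (i) if $p^*\ge 3$, a time $T=\Theta(d^{p^*/2-1})$ is necessary and sufficient to reach $\|\mathbf u(T)\|_2=\Theta(1)$; (ii) if $p^*=2$, a time $T=\Theta(\log d)$ is necessary and sufficient to reach $\|\mathbf u(T)\|_2=\Theta(1)$.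
   Context: Let $h_0=1,h_1(x)=x,h_2(x)=(x^2-1)/\sqrt2,\dots$ be the probabilist's Hermite polynomials normalized to be orthonormal in $L^2$ of the standard Gaussian measure on $\mathbb R$. Let $\sigma,\sigma^*:\mathbb R\to\mathbb R$ be square integrable with respect to the standard Gaussian, with expansions $\sigma=\sum_{p\ge1}a_ph_p$, $\sigma^*=\sum_{p\ge1}b_ph_p$. The information exponent of $\sigma^*$ is $p^*=\min\{p\ge1:b_p\neq0\}$; write $c_p=a_pb_p$. Standing assumptions: $c_{p^*}>0$ and $c_p\ge0$ for all $p\ge p^*$. Let $\mathbf v_1,\dots,\mathbf v_k\in\mathbb R^d$ be linearly independent unit vectors (index vectors), $V=[\mathbf v_1,\dots,\mathbf v_k]$, $A=V^TV$, with $\sum_{p\ge p^*}c_p\,p\,\lambda_{\max}(A)^{p/2}<\infty$, and with $\mathbf v_j^T\mathbf v_{j'}\ge0$ for all $j,j'\in[k]$. The correlation loss is $L(\mathbf w)=C-\mathbb E_{\mathbf x\sim\mathcal N(0,I_d)}\big[\sigma(\mathbf w^T\mathbf x)\sum_{j=1}^k\sigma^*(\mathbf v_j^T\mathbf x)\big]$ for a constant $C$; for unit $\mathbf w$ it equals $C-\sum_{p\ge p^*}c_p\sum_{j=1}^k(\mathbf v_j^T\mathbf w)^p$, and this formula defines $L$ and its Euclidean gradient $\nabla L$ on $\mathbb R^d$. The $\Theta(\cdot)$ statements hide constants independent of $d$. *)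

theory Defs
  imports "HOL-Analysis.Analysis"
begin

(* Vectors of R^d are represented as functions nat => real that vanish
   outside {0..<d} (the dimension d varies, so a type-indexed dimension
   cannot be used).  Index vectors v_1..v_k are V 0, ..., V (k-1). *)

definition ip :: "nat \<Rightarrow> (nat \<Rightarrow> real) \<Rightarrow> (nat \<Rightarrow> real) \<Rightarrow> real" where
  "ip d x y = (\<Sum>i<d. x i * y i)"

(* c_p = a_p b_p from the Hermite coefficients of sigma and sigma^* *)
definition coef_c :: "(nat \<Rightarrow> real) \<Rightarrow> (nat \<Rightarrow> real) \<Rightarrow> nat \<Rightarrow> real" where
  "coef_c a b p = a p * b p"

definition info_exp :: "(nat \<Rightarrow> real) \<Rightarrow> nat" where
  "info_exp b = (LEAST p. 1 \<le> p \<and> b p \<noteq> 0)"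

definition lambda_max :: "nat \<Rightarrow> (nat \<Rightarrow> nat \<Rightarrow> real) \<Rightarrow> real" where
  "lambda_max k A = Max {\<mu>. \<exists>x. (\<exists>j<k. x j \<noteq> 0) \<and>
       (\<forall>j<k. (\<Sum>j'<k. A j j' * x j') = \<mu> * x j)}"

definition corr_loss :: "real \<Rightarrow> (nat \<Rightarrow> real) \<Rightarrow> nat \<Rightarrow> (nat \<Rightarrow> nat \<Rightarrow> real)
    \<Rightarrow> nat \<Rightarrow> (nat \<Rightarrow> real) \<Rightarrow> real" where
  "corr_loss C c k V d w = C - (\<Sum>p. c p * (\<Sum>j<k. (ip d (V j) w) ^ p))"

definition loss_grad :: "(nat \<Rightarrow> real) \<Rightarrow> nat \<Rightarrow> (nat \<Rightarrow> nat \<Rightarrow> real)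
    \<Rightarrow> nat \<Rightarrow> (nat \<Rightarrow> real) \<Rightarrow> nat \<Rightarrow> real" where
  "loss_grad c k V d w i =
     - (\<Sum>p. c p * real p * (\<Sum>j<k. (ip d (V j) w) ^ (p - 1) * V j i))"

definition index_vectors :: "nat \<Rightarrow> (nat \<Rightarrow> nat \<Rightarrow> real) \<Rightarrow> nat
    \<Rightarrow> (nat \<Rightarrow> nat \<Rightarrow> real) \<Rightarrow> bool" where
  "index_vectors k A d V \<longleftrightarrow>
     (\<forall>j<k. \<forall>i. d \<le> i \<longrightarrow> V j i = 0) \<and>
     (\<forall>j<k. \<forall>j'<k. ip d (V j) (V j') = A j j') \<and>
     (\<forall>x. (\<forall>i<d. (\<Sum>j<k. x j * V j i) = 0) \<longrightarrow> (\<forall>j<k. x j = 0))"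

definition sphere_grad_flow :: "(nat \<Rightarrow> real) \<Rightarrow> nat \<Rightarrow> (nat \<Rightarrow> nat \<Rightarrow> real)
    \<Rightarrow> nat \<Rightarrow> (real \<Rightarrow> nat \<Rightarrow> real) \<Rightarrow> bool" where
  "sphere_grad_flow c k V d w \<longleftrightarrow>
     (\<forall>t\<ge>0. \<forall>i. d \<le> i \<longrightarrow> w t i = 0) \<and>
     ip d (w 0) (w 0) = 1 \<and>
     (\<forall>t\<ge>0. \<forall>i<d.
        ((\<lambda>s. w s i) has_real_derivative
           (- (loss_grad c k V d (w t) i
               - w t i * (\<Sum>i'<d. w t i' * loss_grad c k V d (w t) i'))))
        (at t within {0..}))"

definition u_norm :: "nat \<Rightarrow> (nat \<Rightarrow> nat \<Rightarrow> real) \<Rightarrow> nat \<Rightarrow> (nat \<Rightarrow> real) \<Rightarrow> real" where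
  "u_norm k V d x = sqrt (\<Sum>j<k. (ip d (V j) x)^2)"

definition time_scale :: "nat \<Rightarrow> nat \<Rightarrow> real" where
  "time_scale ps d = (if 3 \<le> ps then real d powr (real ps / 2 - 1) else ln (real d))"

end

theory Submission
  imports Defs
begin

definition phi :: "(nat \<Rightarrow> real) \<Rightarrow> real \<Rightarrow> real" where
  "phi c x = (\<Sum>p. c p * real p * x^(p-1))"

lemma summable_np: "summable (\<lambda>n. real (Suc n) * (1/2::real)^n)"
proof -
  have "summable (\<lambda>n. diffs (\<lambda>_. 1::real) n * (1/2::real) ^ n)"
    by (rule termdiff_converges[where K=1]) auto
  then show ?thesis by (simp add: diffs_def)
qed

lemma maj_bound:
  fixes x :: real assumes "\<bar>x\<bar> \<le> 1/2"
  shows "\<bar>real p * x^(p-1)\<bar> \<le> 2 * (real (Suc p) * (1/2)^p)"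
proof (cases p)
  case 0 then show ?thesis by simp
next
  case (Suc n)
  have "\<bar>x\<bar>^n \<le> (1/2)^n" using assms by (intro power_mono) auto
  then have "real p * \<bar>x\<bar>^n \<le> real (Suc p) * (1/2)^n"
    by (intro mult_mono) auto
  then show ?thesis using Suc by (simp add: abs_mult power_abs)
qed

lemma phi_summable:
  fixes c :: "nat \<Rightarrow> real" and x :: real
  assumes cb: "\<And>p. \<bar>c p\<bar> \<le> Cb" and x: "\<bar>x\<bar> \<le> 1/2"
  shows "summable (\<lambda>p. c p * real p * x^(p-1))"
proof (rule summable_comparison_test')
  show "summable (\<lambda>p. Cb * (2 * (real (Suc p) * (1/2)^p)))"
    using summable_np by (intro summable_mult summable_mult) 
  fix p :: nat
  have "\<bar>c p\<bar> * \<bar>real p * x^(p-1)\<bar> \<le> Cb * (2 * (real (Suc p) * (1/2)^p))"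
    using cb maj_bound[OF x, of p] order_trans[OF abs_ge_zero cb] by (intro mult_mono) auto
  then show "norm (c p * real p * x^(p-1)) \<le> Cb * (2 * (real (Suc p) * (1/2)^p))"
    by (simp add: abs_mult mult.assoc)
qed

definition Mc :: "(nat \<Rightarrow> real) \<Rightarrow> nat \<Rightarrow> real" where
  "Mc c q = 2^q * (\<Sum>p. c p * real p * (1/2)^p)"

lemma Mc_summable:
  fixes c :: "nat \<Rightarrow> real"
  assumes cb: "\<And>p. \<bar>c p\<bar> \<le> Cb"
  shows "summable (\<lambda>p. c p * real p * (1/2)^p)"
proof (rule summable_comparison_test')
  show "summable (\<lambda>p. Cb * (real (Suc p) * (1/2)^p))"
    using summable_np by (intro summable_mult)
  fix p :: nat
  have "\<bar>c p\<bar> * (real p * (1/2)^p) \<le> Cb * (real (Suc p) * (1/2)^p)"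
    using cb order_trans[OF abs_ge_zero cb] by (intro mult_mono) auto
  then show "norm (c p * real p * (1/2)^p) \<le> Cb * (real (Suc p) * (1/2)^p)"
    by (simp add: abs_mult mult.assoc)
qed

lemma phi_abs:
  fixes c :: "nat \<Rightarrow> real" and x :: real
  assumes cb: "\<And>p. \<bar>c p\<bar> \<le> Cb" and cnn: "\<And>p. 0 \<le> c p"
    and cz: "\<And>p. p < q \<Longrightarrow> c p = 0" and q: "1 \<le> q"
    and x: "\<bar>x\<bar> \<le> 1/2"
  shows "\<bar>phi c x\<bar> \<le> Mc c q * \<bar>x\<bar>^(q-1)"
proof -
  have s1: "summable (\<lambda>p. c p * real p * x^(p-1))" by (rule phi_summable[OF cb x])
  have s2: "summable (\<lambda>p. \<bar>x\<bar>^(q-1) * (2^q * (c p * real p * (1/2)^p)))"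
    using Mc_summable[OF cb] by (intro summable_mult)
  have pw: "\<bar>c p * real p * x^(p-1)\<bar> \<le> \<bar>x\<bar>^(q-1) * (2^q * (c p * real p * (1/2)^p))" for p
  proof (cases "p < q")
    case True then show ?thesis using cz by simp
  next
    case False
    then have pq: "p - 1 = (q - 1) + (p - q)" using q by simp
    have "\<bar>x\<bar>^(p-q) \<le> (1/2)^(p-q)" using x by (intro power_mono) auto
    also have "(1/2::real)^(p-q) = 2^q * (1/2)^p"
    proof -
      have "(2::real)^q * (1/2)^p = 2^q * ((1/2)^q * (1/2)^(p-q))"
        using False by (simp add: power_add[symmetric])
      also have "\<dots> = (1/2)^(p-q)" by (simp add: power_divide)
      finally show ?thesis by simp
    qed
    finally have h: "\<bar>x\<bar>^(p-q) \<le> 2^q * (1/2::real)^p" .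
    have "\<bar>c p * real p * x^(p-1)\<bar> = c p * real p * (\<bar>x\<bar>^(q-1) * \<bar>x\<bar>^(p-q))"
      using cnn[of p] by (simp add: abs_mult power_abs power_add[symmetric] pq del: One_nat_def)
    also have "\<dots> \<le> c p * real p * (\<bar>x\<bar>^(q-1) * (2^q * (1/2)^p))"
      using h cnn[of p] by (intro mult_left_mono) auto
    finally show ?thesis by (simp add: algebra_simps)
  qed
  have "\<bar>phi c x\<bar> \<le> (\<Sum>p. \<bar>c p * real p * x^(p-1)\<bar>)"
    unfolding phi_def by (rule summable_rabs) (rule summable_comparison_test'[OF s2], use pw in auto)
  also have "\<dots> \<le> (\<Sum>p. \<bar>x\<bar>^(q-1) * (2^q * (c p * real p * (1/2)^p)))"
    by (rule suminf_le[OF pw _ s2]) (rule summable_comparison_test'[OF s2], use pw in auto)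
  also have "\<dots> = \<bar>x\<bar>^(q-1) * Mc c q"
    unfolding Mc_def using Mc_summable[OF cb]
    by (simp add: suminf_mult summable_mult)
  finally show ?thesis by (simp add: mult.commute)
qed

lemma phi_lower:
  fixes c :: "nat \<Rightarrow> real" and x :: real
  assumes cb: "\<And>p. \<bar>c p\<bar> \<le> Cb" and cnn: "\<And>p. 0 \<le> c p"
    and x: "0 \<le> x" "x \<le> 1/2"
  shows "c q * real q * x^(q-1) \<le> phi c x" and "0 \<le> phi c x"
proof -
  have s1: "summable (\<lambda>p. c p * real p * x^(p-1))" by (rule phi_summable[OF cb]) (use x in auto)
  have "sum (\<lambda>p. c p * real p * x^(p-1)) {q} \<le> phi c x"
    unfolding phi_def by (rule sum_le_suminf[OF s1]) (use cnn x in auto)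
  then show "c q * real q * x^(q-1) \<le> phi c x" by simp
  show "0 \<le> phi c x" unfolding phi_def by (rule suminf_nonneg[OF s1]) (use cnn x in auto)
qed

lemma loss_grad_eq:
  fixes c :: "nat \<Rightarrow> real"
  assumes cb: "\<And>p. \<bar>c p\<bar> \<le> Cb"
    and small: "\<forall>j'<k. \<bar>ip d (V j') y\<bar> \<le> 1/2"
  shows "loss_grad c k V d y i = - (\<Sum>j'<k. phi c (ip d (V j') y) * V j' i)"
proof -
  let ?x = "\<lambda>j. ip d (V j) y"
  have "(\<Sum>p. c p * real p * (\<Sum>j<k. ?x j ^ (p - 1) * V j i))
      = (\<Sum>p. \<Sum>j<k. (c p * real p * ?x j ^ (p - 1)) * V j i)"
    by (simp add: sum_distrib_left mult.assoc)
  also have "\<dots> = (\<Sum>j<k. \<Sum>p. (c p * real p * ?x j ^ (p - 1)) * V j i)"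
    by (rule suminf_sum) (intro summable_mult2 phi_summable[OF cb], use small in auto)
  also have "\<dots> = (\<Sum>j<k. phi c (?x j) * V j i)"
  proof (rule sum.cong[OF refl])
    fix j assume "j \<in> {..<k}"
    then have "summable (\<lambda>p. c p * real p * ?x j ^ (p - 1))"
      by (intro phi_summable[OF cb]) (use small in auto)
    then show "(\<Sum>p. (c p * real p * ?x j ^ (p - 1)) * V j i) = phi c (?x j) * V j i"
      unfolding phi_def by (rule suminf_mult2[symmetric])
  qed
  finally show ?thesis unfolding loss_grad_def by simp
qed

lemma u_deriv:
  fixes c :: "nat \<Rightarrow> real"
  assumes flow: "sphere_grad_flow c k V d w" and iv: "index_vectors k A d V"
    and t: "0 \<le> t" and cb: "\<And>p. \<bar>c p\<bar> \<le> Cb"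
    and small: "\<forall>j'<k. \<bar>ip d (V j') (w t)\<bar> \<le> 1/2" and j: "j < k"
  shows "((\<lambda>s. ip d (V j) (w s)) has_real_derivative
     (\<Sum>j'<k. phi c (ip d (V j') (w t)) * (A j j' - ip d (V j) (w t) * ip d (V j') (w t))))
     (at t within {0..})"
proof -
  let ?x = "\<lambda>j. ip d (V j) (w t)"
  define G where "G i = (\<Sum>j'<k. phi c (?x j') * V j' i)" for i
  have lg: "loss_grad c k V d (w t) i = - G i" for i
    unfolding G_def by (rule loss_grad_eq[OF cb small])
  have D: "((\<lambda>s. w s i) has_real_derivative (G i - w t i * (\<Sum>i'<d. w t i' * G i'))) (at t within {0..})"
    if "i < d" for i
  proof -
    have "((\<lambda>s. w s i) has_real_derivative (- (loss_grad c k V d (w t) i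
               - w t i * (\<Sum>i'<d. w t i' * loss_grad c k V d (w t) i')))) (at t within {0..})"
      using flow t that unfolding sphere_grad_flow_def by blast
    then show ?thesis by (simp add: lg sum_negf)
  qed
  have "((\<lambda>s. \<Sum>i<d. V j i * w s i) has_real_derivative
      (\<Sum>i<d. V j i * (G i - w t i * (\<Sum>i'<d. w t i' * G i')))) (at t within {0..})"
    by (intro DERIV_sum DERIV_cmult D) auto
  moreover have "(\<Sum>i<d. V j i * (G i - w t i * (\<Sum>i'<d. w t i' * G i')))
     = (\<Sum>j'<k. phi c (?x j') * (A j j' - ?x j * ?x j'))"
  proof -
    have AA: "ip d (V j) (V j') = A j j'" if "j' < k" for j'
      using iv j that unfolding index_vectors_def by auto
    have e1: "(\<Sum>i<d. V j i * G i) = (\<Sum>j'<k. phi c (?x j') * A j j')"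
    proof -
      have "(\<Sum>i<d. V j i * G i) = (\<Sum>j'<k. phi c (?x j') * (\<Sum>i<d. V j i * V j' i))"
        unfolding G_def by (simp add: sum_distrib_left sum_distrib_right sum.swap[of _ "{..<d}"] algebra_simps)
      also have "\<dots> = (\<Sum>j'<k. phi c (?x j') * A j j')"
        using AA by (intro sum.cong) (auto simp: ip_def)
      finally show ?thesis .
    qed
    have e2: "(\<Sum>i'<d. w t i' * G i') = (\<Sum>j'<k. phi c (?x j') * ?x j')"
      unfolding G_def ip_def
      by (simp add: sum_distrib_left sum_distrib_right sum.swap[of _ "{..<d}"] algebra_simps)
    have "(\<Sum>i<d. V j i * (G i - w t i * (\<Sum>i'<d. w t i' * G i')))
        = (\<Sum>i<d. V j i * G i) - ?x j * (\<Sum>i'<d. w t i' * G i')"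
    proof -
      define S where "S = (\<Sum>i'<d. w t i' * G i')"
      have "(\<Sum>i<d. V j i * (G i - w t i * S)) = (\<Sum>i<d. V j i * G i) - (\<Sum>i<d. V j i * w t i) * S"
        by (simp add: right_diff_distrib sum_subtractf sum_distrib_right mult.assoc)
      then show ?thesis unfolding S_def ip_def by simp
    qed
    also have "\<dots> = (\<Sum>j'<k. phi c (?x j') * (A j j' - ?x j * ?x j'))"
      unfolding e1 e2 by (simp add: algebra_simps sum_subtractf sum_distrib_left)
    finally show ?thesis .
  qed
  ultimately show ?thesis unfolding ip_def by simp
qed

lemma u_cont:
  assumes flow: "sphere_grad_flow c k V d w"
  shows "continuous_on {0..} (\<lambda>s. ip d (V j) (w s))"
proof -
  have "continuous_on {0..} (\<lambda>s. w s i)" if "i < d" for i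
    unfolding continuous_on_eq_continuous_within
  proof
    fix t :: real assume "t \<in> {0..}"
    then show "continuous (at t within {0..}) (\<lambda>s. w s i)"
      using flow that unfolding sphere_grad_flow_def by (meson DERIV_continuous atLeast_iff)
  qed
  then show ?thesis unfolding ip_def
    by (intro continuous_on_sum continuous_on_mult continuous_on_const) auto
qed

lemma bootstrap:
  fixes g :: "nat \<Rightarrow> real \<Rightarrow> real" and X :: real
  assumes cont: "\<And>j. j < k \<Longrightarrow> continuous_on {0..X} (g j)"
    and init: "\<And>j. j < k \<Longrightarrow> g j 0 > 0"
    and step: "\<And>t. 0 \<le> t \<Longrightarrow> t \<le> X \<Longrightarrow> (\<forall>\<tau>. 0 \<le> \<tau> \<and> \<tau> < t \<longrightarrow> (\<forall>j<k. g j \<tau> \<ge> 0))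
                 \<Longrightarrow> (\<forall>j<k. g j t > 0)"
  shows "\<forall>t. 0 \<le> t \<and> t \<le> X \<longrightarrow> (\<forall>j<k. g j t > 0)"
proof (rule ccontr)
  assume neg: "\<not> ?thesis"
  define S where "S = (\<Union>j\<in>{..<k}. {0..X} \<inter> g j -` {..0})"
  obtain t1 j1 where t1: "0 \<le> t1" "t1 \<le> X" "j1 < k" "g j1 t1 \<le> 0"
    using neg by (auto simp: not_less)
  then have "t1 \<in> S" unfolding S_def by auto
  then have ne: "S \<noteq> {}" by auto
  have cj: "closed ({0..X} \<inter> g j -` {..0})" if "j < k" for j
    by (rule continuous_closed_preimage[OF cont[OF that]]) auto
  have cl: "closed S" unfolding S_def
    by (rule closed_UN) (use cj in auto)
  have bb: "bdd_below S" unfolding S_def by (intro bdd_belowI[of _ 0]) auto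
  define t0 where "t0 = Inf S"
  have t0S: "t0 \<in> S" unfolding t0_def by (rule closed_contains_Inf[OF ne bb cl])
  then have t0: "0 \<le> t0" "t0 \<le> X" unfolding S_def by auto
  have "\<forall>\<tau>. 0 \<le> \<tau> \<and> \<tau> < t0 \<longrightarrow> (\<forall>j<k. g j \<tau> \<ge> 0)"
  proof (intro allI impI)
    fix \<tau> j assume a: "0 \<le> \<tau> \<and> \<tau> < t0" and j: "j < k"
    have "\<tau> \<notin> S"
    proof
      assume "\<tau> \<in> S"
      then have "t0 \<le> \<tau>" unfolding t0_def by (rule cInf_lower[OF _ bb])
      with a show False by simp
    qed
    then have "\<tau> \<notin> {0..X} \<inter> g j -` {..0}" using j unfolding S_def by blast
    then show "g j \<tau> \<ge> 0" using a t0 by auto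
  qed
  note pos = step[OF t0 this]
  from t0S obtain j where "j < k" "g j t0 \<le> 0" unfolding S_def by auto
  with pos show False by force
qed

lemma mono_deriv:
  fixes f f' :: "real \<Rightarrow> real"
  assumes t: "0 \<le> t" and cont: "continuous_on {0..t} f"
    and der: "\<And>\<tau>. 0 < \<tau> \<Longrightarrow> \<tau> < t \<Longrightarrow> (f has_real_derivative f' \<tau>) (at \<tau> within {0..}) \<and> f' \<tau> \<ge> 0"
  shows "f 0 \<le> f t"
proof (rule DERIV_nonneg_imp_increasing_open[OF t _ cont])
  fix x :: real assume x: "0 < x" "x < t"
  have "at x within {0..} = at x"
    by (rule at_within_interior) (use x in \<open>simp add: interior_real_atLeast\<close>)
  then show "\<exists>y. (f has_real_derivative y) (at x) \<and> 0 \<le> y" using der[OF x] by auto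
qed

lemma ode_lo_exp:
  fixes f f' :: "real \<Rightarrow> real"
  assumes t: "0 \<le> t" and cont: "continuous_on {0..t} f"
    and der: "\<And>\<tau>. 0 < \<tau> \<Longrightarrow> \<tau> < t \<Longrightarrow> (f has_real_derivative f' \<tau>) (at \<tau> within {0..}) \<and> \<kappa> * f \<tau> \<le> f' \<tau>"
  shows "f 0 * exp (\<kappa> * t) \<le> f t"
proof -
  let ?h = "\<lambda>\<tau>. f \<tau> * exp (- \<kappa> * \<tau>)"
  have "?h 0 \<le> ?h t"
  proof (rule mono_deriv[OF t])
    show "continuous_on {0..t} ?h" by (intro continuous_intros cont)
    fix \<tau> :: real assume a: "0 < \<tau>" "\<tau> < t"
    have d: "(?h has_real_derivative (f' \<tau> * exp (- \<kappa> * \<tau>) + f \<tau> * (exp (- \<kappa> * \<tau>) * (- \<kappa>))))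
        (at \<tau> within {0..})"
      using der[OF a] by (auto intro!: derivative_eq_intros)
    have "0 \<le> (f' \<tau> - \<kappa> * f \<tau>) * exp (- \<kappa> * \<tau>)" using der[OF a] by simp
    then show "(?h has_real_derivative (f' \<tau> * exp (- \<kappa> * \<tau>) + f \<tau> * (exp (- \<kappa> * \<tau>) * (- \<kappa>))))
        (at \<tau> within {0..}) \<and> 0 \<le> f' \<tau> * exp (- \<kappa> * \<tau>) + f \<tau> * (exp (- \<kappa> * \<tau>) * (- \<kappa>))"
      using d by (simp add: algebra_simps)
  qed
  then have "f 0 \<le> f t * exp (- \<kappa> * t)" by simp
  then have "f 0 * exp (\<kappa> * t) \<le> f t * exp (- \<kappa> * t) * exp (\<kappa> * t)"
    by (intro mult_right_mono) auto
  also have "\<dots> = f t" by (simp add: mult.assoc exp_add[symmetric])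
  finally show ?thesis .
qed

lemma ode_up_exp:
  fixes f f' :: "real \<Rightarrow> real"
  assumes t: "0 \<le> t" and cont: "continuous_on {0..t} f"
    and der: "\<And>\<tau>. 0 < \<tau> \<Longrightarrow> \<tau> < t \<Longrightarrow> (f has_real_derivative f' \<tau>) (at \<tau> within {0..}) \<and> f' \<tau> \<le> K * f \<tau>"
  shows "f t \<le> f 0 * exp (K * t)"
proof -
  have "(- f) 0 * exp (K * t) \<le> (- f) t"
  proof (rule ode_lo_exp[OF t, where f' = "\<lambda>\<tau>. - f' \<tau>"])
    show "continuous_on {0..t} (- f)" using cont by (simp add: fun_Compl_def continuous_on_minus)
    fix \<tau> :: real assume a: "0 < \<tau>" "\<tau> < t"
    show "((- f) has_real_derivative - f' \<tau>) (at \<tau> within {0..}) \<and> K * (- f) \<tau> \<le> - f' \<tau>"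
      using der[OF a] by (auto simp: fun_Compl_def intro!: derivative_eq_intros)
  qed
  then show ?thesis by simp
qed

lemma ode_up_pow:
  fixes f f' :: "real \<Rightarrow> real" and m :: nat
  assumes t: "0 \<le> t" and cont: "continuous_on {0..t} f" and pos: "\<And>\<tau>. 0 \<le> \<tau> \<Longrightarrow> \<tau> \<le> t \<Longrightarrow> f \<tau> > 0"
    and der: "\<And>\<tau>. 0 < \<tau> \<Longrightarrow> \<tau> < t \<Longrightarrow> (f has_real_derivative f' \<tau>) (at \<tau> within {0..}) \<and> f' \<tau> \<le> K * f \<tau> ^ (m+1)"
  shows "1 / f 0 ^ m - real m * K * t \<le> 1 / f t ^ m"
proof -
  let ?h = "\<lambda>\<tau>. inverse (f \<tau> ^ m) + real m * K * \<tau>"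
  have "?h 0 \<le> ?h t"
  proof (rule mono_deriv[OF t])
    show "continuous_on {0..t} ?h"
      using pos by (intro continuous_intros cont) (auto, force)
    fix \<tau> :: real assume a: "0 < \<tau>" "\<tau> < t"
    have fp: "f \<tau> > 0" using pos a by auto
    have d: "(?h has_real_derivative (- (inverse (f \<tau> ^ m) * (real m * f \<tau> ^ (m - 1) * f' \<tau>) * inverse (f \<tau> ^ m)) + real m * K))
        (at \<tau> within {0..})"
      using der[OF a] fp by (auto intro!: derivative_eq_intros)
    have eq: "inverse (f \<tau> ^ m) * (real m * f \<tau> ^ (m - 1) * f' \<tau>) * inverse (f \<tau> ^ m)
         = real m * f' \<tau> / f \<tau> ^ (m+1)"
    proof (cases m)
      case 0 then show ?thesis by simp
    next
      case (Suc n)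
      then show ?thesis using fp by (simp add: field_simps)
    qed
    have "f' \<tau> / f \<tau> ^ (m+1) \<le> K" using der[OF a] fp by (simp add: divide_le_eq)
    then have "real m * f' \<tau> / f \<tau> ^ (m+1) \<le> real m * K"
      by (metis mult_left_mono of_nat_0_le_iff times_divide_eq_right)
    then show "(?h has_real_derivative (- (inverse (f \<tau> ^ m) * (real m * f \<tau> ^ (m - 1) * f' \<tau>) * inverse (f \<tau> ^ m)) + real m * K))
        (at \<tau> within {0..}) \<and> 0 \<le> - (inverse (f \<tau> ^ m) * (real m * f \<tau> ^ (m - 1) * f' \<tau>) * inverse (f \<tau> ^ m)) + real m * K"
      using d eq by simp
  qed
  then show ?thesis by (simp add: divide_inverse)
qed

lemma ode_lo_pow:
  fixes f f' :: "real \<Rightarrow> real" and m :: nat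
  assumes t: "0 \<le> t" and cont: "continuous_on {0..t} f" and pos: "\<And>\<tau>. 0 \<le> \<tau> \<Longrightarrow> \<tau> \<le> t \<Longrightarrow> f \<tau> > 0"
    and der: "\<And>\<tau>. 0 < \<tau> \<Longrightarrow> \<tau> < t \<Longrightarrow> (f has_real_derivative f' \<tau>) (at \<tau> within {0..}) \<and> \<kappa> * f \<tau> ^ (m+1) \<le> f' \<tau>"
  shows "1 / f t ^ m \<le> 1 / f 0 ^ m - real m * \<kappa> * t"
proof -
  let ?h = "\<lambda>\<tau>. - inverse (f \<tau> ^ m) - real m * \<kappa> * \<tau>"
  have "?h 0 \<le> ?h t"
  proof (rule mono_deriv[OF t])
    show "continuous_on {0..t} ?h"
      using pos by (intro continuous_intros cont) (auto, force)
    fix \<tau> :: real assume a: "0 < \<tau>" "\<tau> < t"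
    have fp: "f \<tau> > 0" using pos a by auto
    have d: "(?h has_real_derivative (- (- (inverse (f \<tau> ^ m) * (real m * f \<tau> ^ (m - 1) * f' \<tau>) * inverse (f \<tau> ^ m))) - real m * \<kappa>))
        (at \<tau> within {0..})"
      using der[OF a] fp by (auto intro!: derivative_eq_intros)
    have eq: "inverse (f \<tau> ^ m) * (real m * f \<tau> ^ (m - 1) * f' \<tau>) * inverse (f \<tau> ^ m)
         = real m * f' \<tau> / f \<tau> ^ (m+1)"
    proof (cases m)
      case 0 then show ?thesis by simp
    next
      case (Suc n)
      then show ?thesis using fp by (simp add: field_simps)
    qed
    have "\<kappa> \<le> f' \<tau> / f \<tau> ^ (m+1)" using der[OF a] fp by (simp add: le_divide_eq)
    then have "real m * \<kappa> \<le> real m * f' \<tau> / f \<tau> ^ (m+1)"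
      by (metis mult_left_mono of_nat_0_le_iff times_divide_eq_right)
    then show "(?h has_real_derivative (- (- (inverse (f \<tau> ^ m) * (real m * f \<tau> ^ (m - 1) * f' \<tau>) * inverse (f \<tau> ^ m))) - real m * \<kappa>))
        (at \<tau> within {0..}) \<and> 0 \<le> - (- (inverse (f \<tau> ^ m) * (real m * f \<tau> ^ (m - 1) * f' \<tau>) * inverse (f \<tau> ^ m))) - real m * \<kappa>"
      using d eq by simp
  qed
  then show ?thesis by (simp add: divide_inverse)
qed

locale dyn =
  fixes c :: "nat \<Rightarrow> real" and q k :: nat and A :: "nat \<Rightarrow> nat \<Rightarrow> real" and Cb :: real
    and u :: "real \<Rightarrow> nat \<Rightarrow> real"
  assumes cb: "\<And>p. \<bar>c p\<bar> \<le> Cb" and cnn: "\<And>p. 0 \<le> c p" and cz: "\<And>p. p < q \<Longrightarrow> c p = 0"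
    and q2: "2 \<le> q" and cq: "0 < c q" and k1: "1 \<le> k"
    and Ann: "\<And>j j'. j < k \<Longrightarrow> j' < k \<Longrightarrow> 0 \<le> A j j'"
    and Aone: "\<And>j. j < k \<Longrightarrow> A j j = 1"
    and ucont: "\<And>j. continuous_on {0..} (\<lambda>t. u t j)"
    and uder: "\<And>t j. 0 \<le> t \<Longrightarrow> (\<forall>j'<k. \<bar>u t j'\<bar> \<le> 1/2) \<Longrightarrow> j < k \<Longrightarrow>
       ((\<lambda>s. u s j) has_real_derivative
          (\<Sum>j'<k. phi c (u t j') * (A j j' - u t j * u t j'))) (at t within {0..})"
begin

definition F where "F t j = (\<Sum>j'<k. phi c (u t j') * (A j j' - u t j * u t j'))"
definition ss where "ss t = (\<Sum>j<k. (u t j)^2)"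
definition Ab where "Ab = (\<Sum>j<k. \<Sum>j'<k. \<bar>A j j'\<bar>)"
definition Mq where "Mq = Mc c q"
definition KK where "KK = 2 * real k * Mq * (Ab + real k) + 1"

lemma Mq_nonneg: "0 \<le> Mq"
proof -
  have "\<bar>phi c 0\<bar> \<le> Mc c q * \<bar>0\<bar>^(q-1)" by (rule phi_abs[OF cb cnn cz]) (use q2 in auto)
  have "0 \<le> (\<Sum>p. c p * real p * (1/2::real)^p)"
    by (rule suminf_nonneg[OF Mc_summable[OF cb]]) (use cnn in auto)
  then show ?thesis unfolding Mq_def Mc_def by simp
qed

lemma Ab_nonneg: "0 \<le> Ab" unfolding Ab_def by (intro sum_nonneg) auto

lemma KK_pos: "0 < KK"
  unfolding KK_def using Mq_nonneg Ab_nonneg by (intro add_nonneg_pos mult_nonneg_nonneg) auto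

lemma u_le_ss: "j < k \<Longrightarrow> \<bar>u t j\<bar> \<le> sqrt (ss t)"
proof -
  assume j: "j < k"
  have "(u t j)^2 \<le> ss t" unfolding ss_def
    using j by (intro member_le_sum[where f = "\<lambda>j. (u t j)^2"]) auto
  then show ?thesis by (metis real_sqrt_abs real_sqrt_le_mono)
qed

lemma ss_nonneg: "0 \<le> ss t" unfolding ss_def by (intro sum_nonneg) auto

lemma F_bound:
  assumes reg: "\<forall>j'<k. \<bar>u t j'\<bar> \<le> 1/2" and j: "j < k"
  shows "\<bar>F t j\<bar> \<le> Mq * sqrt (ss t)^(q-1) * (Ab + real k)"
proof -
  let ?r = "sqrt (ss t)"
  have "\<bar>F t j\<bar> \<le> (\<Sum>j'<k. \<bar>phi c (u t j') * (A j j' - u t j * u t j')\<bar>)"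
    unfolding F_def by (rule sum_abs)
  also have "\<dots> \<le> (\<Sum>j'<k. Mq * ?r^(q-1) * (\<bar>A j j'\<bar> + 1))"
  proof (rule sum_mono)
    fix j' assume j': "j' \<in> {..<k}"
    have "\<bar>phi c (u t j')\<bar> \<le> Mq * \<bar>u t j'\<bar>^(q-1)"
      unfolding Mq_def by (rule phi_abs[OF cb cnn cz]) (use q2 reg j' in auto)
    also have "\<dots> \<le> Mq * ?r^(q-1)"
      using u_le_ss[of j' t] j' Mq_nonneg by (intro mult_left_mono power_mono) auto
    finally have h1: "\<bar>phi c (u t j')\<bar> \<le> Mq * ?r^(q-1)" .
    have "\<bar>u t j * u t j'\<bar> \<le> 1"
    proof -
      have "\<bar>u t j\<bar> * \<bar>u t j'\<bar> \<le> 1 * 1" using reg j j' by (intro mult_mono) auto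
      then show ?thesis by (simp add: abs_mult)
    qed
    then have h2: "\<bar>A j j' - u t j * u t j'\<bar> \<le> \<bar>A j j'\<bar> + 1" by linarith
    show "\<bar>phi c (u t j') * (A j j' - u t j * u t j')\<bar> \<le> Mq * ?r^(q-1) * (\<bar>A j j'\<bar> + 1)"
      unfolding abs_mult by (intro mult_mono h1 h2) (use ss_nonneg[of t] in \<open>auto intro!: mult_nonneg_nonneg Mq_nonneg\<close>)
  qed
  also have "\<dots> = Mq * ?r^(q-1) * ((\<Sum>j'<k. \<bar>A j j'\<bar>) + real k)"
    by (simp add: sum_distrib_left[symmetric] sum.distrib)
  also have "\<dots> \<le> Mq * ?r^(q-1) * (Ab + real k)"
  proof -
    have "(\<Sum>j'<k. \<bar>A j j'\<bar>) \<le> Ab" unfolding Ab_def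
      using j by (intro member_le_sum[where f = "\<lambda>j. \<Sum>j'<k. \<bar>A j j'\<bar>"]) (auto intro: sum_nonneg)
    then show ?thesis using Mq_nonneg ss_nonneg[of t] by (intro mult_left_mono) auto
  qed
  finally show ?thesis .
qed

lemma ss_deriv:
  assumes t: "0 \<le> t" and reg: "\<forall>j'<k. \<bar>u t j'\<bar> \<le> 1/2"
  shows "(ss has_real_derivative (\<Sum>j<k. 2 * u t j * F t j)) (at t within {0..})"
    and "(\<Sum>j<k. 2 * u t j * F t j) \<le> KK * sqrt (ss t)^q"
proof -
  show "(ss has_real_derivative (\<Sum>j<k. 2 * u t j * F t j)) (at t within {0..})"
    unfolding ss_def[abs_def] F_def
    by (intro DERIV_sum) (auto intro!: derivative_eq_intros uder[OF t reg])
  let ?r = "sqrt (ss t)"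
  have "(\<Sum>j<k. 2 * u t j * F t j) \<le> (\<Sum>j<k. 2 * ?r * (Mq * ?r^(q-1) * (Ab + real k)))"
  proof (rule sum_mono)
    fix j assume j: "j \<in> {..<k}"
    have "2 * u t j * F t j \<le> 2 * \<bar>u t j\<bar> * \<bar>F t j\<bar>" by (simp add: abs_mult[symmetric])
    also have "\<dots> \<le> 2 * ?r * (Mq * ?r^(q-1) * (Ab + real k))"
      using u_le_ss[of j t] F_bound[OF reg, of j] j ss_nonneg[of t] by (intro mult_mono) auto
    finally show "2 * u t j * F t j \<le> 2 * ?r * (Mq * ?r^(q-1) * (Ab + real k))" .
  qed
  also have "\<dots> = (2 * real k * Mq * (Ab + real k)) * (?r * ?r^(q-1))" by (simp add: algebra_simps)
  also have "?r * ?r^(q-1) = ?r^q" using q2 by (simp add: power_eq_if[of _ q])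
  also have "(2 * real k * Mq * (Ab + real k)) * ?r^q \<le> KK * ?r^q"
    unfolding KK_def using ss_nonneg[of t] by (intro mult_right_mono) auto
  finally show "(\<Sum>j<k. 2 * u t j * F t j) \<le> KK * sqrt (ss t)^q" .
qed

lemma ss_cont: "continuous_on {0..} ss"
  unfolding ss_def[abs_def] by (intro continuous_intros ucont)

lemma sg_deriv:
  assumes t: "0 \<le> t" and reg: "\<forall>j'<k. \<bar>u t j'\<bar> \<le> 1/2" and rho: "0 < \<rho>"
  shows "((\<lambda>t. sqrt (ss t + \<rho>)) has_real_derivative
           (\<Sum>j<k. 2 * u t j * F t j) / (2 * sqrt (ss t + \<rho>))) (at t within {0..})"
    and "(\<Sum>j<k. 2 * u t j * F t j) / (2 * sqrt (ss t + \<rho>)) \<le> (KK/2) * sqrt (ss t + \<rho>)^(q-1)"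
proof -
  have pos: "0 < ss t + \<rho>" using ss_nonneg[of t] rho by linarith
  show "((\<lambda>t. sqrt (ss t + \<rho>)) has_real_derivative
           (\<Sum>j<k. 2 * u t j * F t j) / (2 * sqrt (ss t + \<rho>))) (at t within {0..})"
    using pos ss_deriv(1)[OF t reg] ss_nonneg[of t] rho
    by (auto intro!: derivative_eq_intros simp: divide_simps)
  let ?s = "sqrt (ss t + \<rho>)"
  have sp: "0 < ?s" using pos by simp
  have "sqrt (ss t) \<le> ?s" using rho ss_nonneg[of t] by simp
  then have "sqrt (ss t)^q \<le> ?s^q" using ss_nonneg[of t] by (intro power_mono) auto
  then have "(\<Sum>j<k. 2 * u t j * F t j) \<le> KK * ?s^q"
    using ss_deriv(2)[OF t reg] KK_pos by (meson less_imp_le mult_left_mono order_trans)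
  also have "KK * ?s^q = (KK/2) * ?s^(q-1) * (2 * ?s)"
    using q2 by (simp add: power_eq_if[of _ q] algebra_simps)
  finally show "(\<Sum>j<k. 2 * u t j * F t j) / (2 * ?s) \<le> (KK/2) * ?s^(q-1)"
    using sp by (simp add: divide_le_eq)
qed

lemma upper_generic:
  assumes e: "0 < e" "e \<le> 1/2" and rho: "0 < \<rho>" and X: "0 \<le> X" and s0: "ss 0 < e^2"
    and H: "\<And>t f'. 0 \<le> t \<Longrightarrow> t \<le> X \<Longrightarrow> continuous_on {0..t} (\<lambda>t. sqrt (ss t + \<rho>)) \<Longrightarrow>
      (\<And>\<tau>. 0 \<le> \<tau> \<Longrightarrow> \<tau> \<le> t \<Longrightarrow> sqrt (ss \<tau> + \<rho>) > 0) \<Longrightarrow>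
      (\<And>\<tau>. 0 < \<tau> \<Longrightarrow> \<tau> < t \<Longrightarrow> ((\<lambda>t. sqrt (ss t + \<rho>)) has_real_derivative f' \<tau>) (at \<tau> within {0..})
            \<and> f' \<tau> \<le> (KK/2) * sqrt (ss \<tau> + \<rho>)^(q-1)) \<Longrightarrow> sqrt (ss t + \<rho>) < e"
  shows "\<forall>t. 0 \<le> t \<and> t \<le> X \<longrightarrow> ss t < e^2"
proof -
  have b: "\<forall>t. 0 \<le> t \<and> t \<le> X \<longrightarrow> (\<forall>j<(1::nat). e^2 - ss t > 0)"
  proof (rule bootstrap[where g="\<lambda>j t. e^2 - ss t"])
    fix j :: nat
    show "continuous_on {0..X} (\<lambda>t. e^2 - ss t)"
      by (intro continuous_intros continuous_on_subset[OF ss_cont]) auto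
    show "e^2 - ss 0 > 0" using s0 by simp
  next
    fix t :: real assume t: "0 \<le> t" "t \<le> X"
      and prem: "\<forall>\<tau>. 0 \<le> \<tau> \<and> \<tau> < t \<longrightarrow> (\<forall>j<(1::nat). e^2 - ss \<tau> \<ge> 0)"
    have reg: "\<forall>j'<k. \<bar>u \<tau> j'\<bar> \<le> 1/2" if "0 \<le> \<tau>" "\<tau> < t" for \<tau>
    proof (intro allI impI)
      fix j' assume "j' < k"
      then have "\<bar>u \<tau> j'\<bar> \<le> sqrt (ss \<tau>)" by (rule u_le_ss)
      also have "sqrt (ss \<tau>) \<le> sqrt (e^2)" using prem that by (intro real_sqrt_le_mono) auto
      also have "\<dots> = e" using e by simp
      finally show "\<bar>u \<tau> j'\<bar> \<le> 1/2" using e by simp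
    qed
    have "sqrt (ss t + \<rho>) < e"
    proof (rule H[OF t])
      show "continuous_on {0..t} (\<lambda>t. sqrt (ss t + \<rho>))"
        by (intro continuous_intros continuous_on_subset[OF ss_cont]) auto
      fix \<tau> :: real
      show "0 \<le> \<tau> \<Longrightarrow> \<tau> \<le> t \<Longrightarrow> sqrt (ss \<tau> + \<rho>) > 0" using ss_nonneg[of \<tau>] rho by simp
      assume "0 < \<tau>" "\<tau> < t"
      then show "((\<lambda>t. sqrt (ss t + \<rho>)) has_real_derivative
           (\<Sum>j<k. 2 * u \<tau> j * F \<tau> j) / (2 * sqrt (ss \<tau> + \<rho>))) (at \<tau> within {0..})
            \<and> (\<Sum>j<k. 2 * u \<tau> j * F \<tau> j) / (2 * sqrt (ss \<tau> + \<rho>)) \<le> (KK/2) * sqrt (ss \<tau> + \<rho>)^(q-1)"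
        using sg_deriv[OF _ reg rho] by auto
    qed
    then have "ss t + \<rho> < e^2"
      using e by (metis abs_of_pos real_sqrt_abs real_sqrt_less_iff)
    then show "\<forall>j<(1::nat). e^2 - ss t > 0" using rho by simp
  qed
  then show ?thesis by auto
qed

definition Psi where "Psi t = (\<Sum>j<k. u t j)"
definition kap where "kap = c q * real q / (2 * real k ^ (q-1))"

lemma kap_pos: "0 < kap" unfolding kap_def using cq q2 k1 by (intro divide_pos_pos mult_pos_pos) auto

lemma F_split: "F t j = (\<Sum>j'<k. phi c (u t j') * A j j') - u t j * (\<Sum>j'<k. phi c (u t j') * u t j')"
  unfolding F_def by (simp add: right_diff_distrib sum_subtractf sum_distrib_left algebra_simps)

lemma F_lower_exp:
  assumes j: "j < k" and nn: "\<forall>j'<k. 0 \<le> u t j'" and reg: "\<forall>j'<k. \<bar>u t j'\<bar> \<le> 1/2"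
  shows "- (real k * Mq) * u t j \<le> F t j"
proof -
  have ph: "0 \<le> phi c (u t j')" if "j' < k" for j'
    by (rule phi_lower(2)[OF cb cnn]) (use nn reg that in auto)
  have a1: "0 \<le> (\<Sum>j'<k. phi c (u t j') * A j j')"
    using ph Ann j by (intro sum_nonneg mult_nonneg_nonneg) auto
  have "(\<Sum>j'<k. phi c (u t j') * u t j') \<le> (\<Sum>j'<k. Mq)"
  proof (rule sum_mono)
    fix j' assume j': "j' \<in> {..<k}"
    have "\<bar>phi c (u t j')\<bar> \<le> Mq * \<bar>u t j'\<bar>^(q-1)"
      unfolding Mq_def by (rule phi_abs[OF cb cnn cz]) (use q2 reg j' in auto)
    also have "\<dots> \<le> Mq * 1"
      using reg j' Mq_nonneg by (intro mult_left_mono power_le_one) auto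
    finally have "phi c (u t j') \<le> Mq" by simp
    moreover have "u t j' \<le> 1" using reg j' by force
    moreover have "0 \<le> u t j'" using nn j' by auto
    ultimately have "phi c (u t j') * u t j' \<le> Mq * 1"
      using Mq_nonneg by (intro mult_mono) auto
    then show "phi c (u t j') * u t j' \<le> Mq" by simp
  qed
  then have "(\<Sum>j'<k. phi c (u t j') * u t j') \<le> real k * Mq" by simp
  then have "u t j * (\<Sum>j'<k. phi c (u t j') * u t j') \<le> u t j * (real k * Mq)"
    using nn j by (intro mult_left_mono) auto
  then show ?thesis using a1 unfolding F_split by (simp add: algebra_simps)
qed

lemma sumF_lower:
  assumes nn: "\<forall>j'<k. 0 \<le> u t j'" and small: "\<forall>j'<k. \<bar>u t j'\<bar> \<le> 1 / (2 * real k)"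
  shows "kap * Psi t ^ (q-1) \<le> (\<Sum>j<k. F t j)"
proof -
  have kpos: "0 < real k" using k1 by simp
  have hk: "1 / (2 * real k) \<le> 1/2" using k1 by (simp add: field_simps)
  have reg: "\<forall>j'<k. \<bar>u t j'\<bar> \<le> 1/2" using small hk order_trans by blast
  have ph: "0 \<le> phi c (u t j')" if "j' < k" for j'
    by (rule phi_lower(2)[OF cb cnn]) (use nn reg that in auto)
  have Psi_le: "Psi t \<le> 1/2"
  proof -
    have "Psi t \<le> (\<Sum>j<k. 1 / (2 * real k))" unfolding Psi_def using small by (intro sum_mono) force
    then show ?thesis using kpos by simp
  qed
  have Psi_nn: "0 \<le> Psi t" unfolding Psi_def using nn by (intro sum_nonneg) auto
  have eq: "(\<Sum>j<k. F t j) = (\<Sum>j'<k. phi c (u t j') * ((\<Sum>j<k. A j j') - u t j' * Psi t))"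
  proof -
    have "(\<Sum>j<k. F t j) = (\<Sum>j'<k. \<Sum>j<k. phi c (u t j') * (A j j' - u t j * u t j'))"
      unfolding F_def by (rule sum.swap)
    also have "\<dots> = (\<Sum>j'<k. phi c (u t j') * (\<Sum>j<k. (A j j' - u t j * u t j')))"
      by (simp add: sum_distrib_left)
    also have "\<dots> = (\<Sum>j'<k. phi c (u t j') * ((\<Sum>j<k. A j j') - u t j' * Psi t))"
      unfolding Psi_def by (simp add: sum_subtractf sum_distrib_left sum_distrib_right mult.commute)
    finally show ?thesis .
  qed
  have "(\<Sum>j'<k. phi c (u t j') * (1/2)) \<le> (\<Sum>j'<k. phi c (u t j') * ((\<Sum>j<k. A j j') - u t j' * Psi t))"
  proof (rule sum_mono)
    fix j' assume j': "j' \<in> {..<k}"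
    have "A j' j' \<le> (\<Sum>j<k. A j j')"
      using j' Ann by (intro member_le_sum[where f = "\<lambda>j. A j j'"]) auto
    then have s1: "1 \<le> (\<Sum>j<k. A j j')" using Aone j' by auto
    have "u t j' * Psi t \<le> 1 * (1/2)"
      using reg j' nn Psi_le Psi_nn by (intro mult_mono) force+
    then have "1/2 \<le> (\<Sum>j<k. A j j') - u t j' * Psi t" using s1 by linarith
    then show "phi c (u t j') * (1/2) \<le> phi c (u t j') * ((\<Sum>j<k. A j j') - u t j' * Psi t)"
      using ph j' by (intro mult_left_mono) auto
  qed
  moreover
  obtain j0 where j0: "j0 < k" "Psi t / real k \<le> u t j0"
  proof (rule ccontr)
    assume "\<not> thesis"
    then have lt: "\<forall>j<k. u t j < Psi t / real k" using that by force
    have "Psi t = (\<Sum>j<k. u t j)" by (simp add: Psi_def)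
    also have "\<dots> < (\<Sum>j<k. Psi t / real k)"
      using lt k1 by (intro sum_strict_mono) (auto simp: lessThan_empty_iff)
    finally have "Psi t < (\<Sum>j<k. Psi t / real k)" .
    then show False using kpos by simp
  qed
  have "phi c (u t j0) \<le> (\<Sum>j'<k. phi c (u t j'))"
    using j0 ph by (intro member_le_sum[where f = "\<lambda>j'. phi c (u t j')"]) auto
  moreover have "c q * real q * (Psi t / real k)^(q-1) \<le> phi c (u t j0)"
  proof -
    have "c q * real q * (Psi t / real k)^(q-1) \<le> c q * real q * (u t j0)^(q-1)"
      using j0 Psi_nn kpos cq by (intro mult_left_mono power_mono) auto
    also have "\<dots> \<le> phi c (u t j0)"
      by (rule phi_lower(1)[OF cb cnn]) (use nn reg j0 in auto)
    finally show ?thesis .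
  qed
  moreover have "kap * Psi t ^ (q-1) = (c q * real q * (Psi t / real k)^(q-1)) / 2"
    unfolding kap_def by (simp add: power_divide)
  moreover have "(\<Sum>j'<k. phi c (u t j') * (1/2)) = (\<Sum>j'<k. phi c (u t j')) / 2"
    by (simp add: sum_divide_distrib)
  ultimately show ?thesis unfolding eq by linarith
qed

lemma small_reg:
  assumes "sqrt (ss t) < 1 / (2 * real k)"
  shows "\<forall>j'<k. \<bar>u t j'\<bar> \<le> 1 / (2 * real k)" and "\<forall>j'<k. \<bar>u t j'\<bar> \<le> 1/2"
proof -
  have hk: "1 / (2 * real k) \<le> 1/2" using k1 by (simp add: field_simps)
  show "\<forall>j'<k. \<bar>u t j'\<bar> \<le> 1 / (2 * real k)" using u_le_ss assms by (meson less_imp_le order_trans)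
  then show "\<forall>j'<k. \<bar>u t j'\<bar> \<le> 1/2" using hk by (meson order_trans)
qed

lemma lower_pos:
  assumes X: "0 \<le> X" and small: "\<forall>t. 0 \<le> t \<and> t \<le> X \<longrightarrow> sqrt (ss t) < 1 / (2 * real k)"
    and init: "\<forall>j<k. 0 < u 0 j"
  shows "\<forall>t. 0 \<le> t \<and> t \<le> X \<longrightarrow> (\<forall>j<k. 0 < u t j)"
proof (rule bootstrap[where g = "\<lambda>j t. u t j"])
  fix j
  show "continuous_on {0..X} (\<lambda>t. u t j)" by (rule continuous_on_subset[OF ucont]) auto
  assume "j < k" then show "0 < u 0 j" using init by auto
next
  fix t :: real assume t: "0 \<le> t" "t \<le> X"
    and prem: "\<forall>\<tau>. 0 \<le> \<tau> \<and> \<tau> < t \<longrightarrow> (\<forall>j<k. 0 \<le> u \<tau> j)"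
  show "\<forall>j<k. 0 < u t j"
  proof (intro allI impI)
    fix j assume j: "j < k"
    have "u 0 j * exp (- (real k * Mq) * t) \<le> u t j"
    proof (rule ode_lo_exp[OF t(1), where f' = "\<lambda>\<tau>. F \<tau> j"])
      show "continuous_on {0..t} (\<lambda>s. u s j)" by (rule continuous_on_subset[OF ucont]) auto
      fix \<tau> :: real assume a: "0 < \<tau>" "\<tau> < t"
      have reg: "\<forall>j'<k. \<bar>u \<tau> j'\<bar> \<le> 1/2" using small_reg(2) small a t by auto
      have nn: "\<forall>j'<k. 0 \<le> u \<tau> j'" using prem a by auto
      show "((\<lambda>s. u s j) has_real_derivative F \<tau> j) (at \<tau> within {0..}) \<and> - (real k * Mq) * u \<tau> j \<le> F \<tau> j"
        using uder[OF _ reg j] a F_lower_exp[OF j nn reg] unfolding F_def by auto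
    qed
    moreover have "0 < u 0 j * exp (- (real k * Mq) * t)" using init j by auto
    ultimately show "0 < u t j" by linarith
  qed
qed

lemma Psi_deriv:
  assumes X: "0 \<le> X" and small: "\<forall>t. 0 \<le> t \<and> t \<le> X \<longrightarrow> sqrt (ss t) < 1 / (2 * real k)"
    and init: "\<forall>j<k. 0 < u 0 j" and a: "0 < \<tau>" "\<tau> < X"
  shows "(Psi has_real_derivative (\<Sum>j<k. F \<tau> j)) (at \<tau> within {0..}) \<and> kap * Psi \<tau> ^ (q-2+1) \<le> (\<Sum>j<k. F \<tau> j)"
proof -
  have reg: "\<forall>j'<k. \<bar>u \<tau> j'\<bar> \<le> 1/2" using small_reg(2) small a by auto
  have reg2: "\<forall>j'<k. \<bar>u \<tau> j'\<bar> \<le> 1 / (2 * real k)" using small_reg(1) small a by auto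
  have nn: "\<forall>j'<k. 0 \<le> u \<tau> j'" using lower_pos[OF X small init] a by (auto intro: less_imp_le)
  have "(Psi has_real_derivative (\<Sum>j<k. F \<tau> j)) (at \<tau> within {0..})"
    unfolding Psi_def[abs_def] F_def using a by (intro DERIV_sum uder reg) auto
  moreover have "q - 2 + 1 = q - 1" using q2 by simp
  ultimately show ?thesis using sumF_lower[OF nn reg2] by simp
qed

lemma Psi_pos:
  assumes X: "0 \<le> X" and small: "\<forall>t. 0 \<le> t \<and> t \<le> X \<longrightarrow> sqrt (ss t) < 1 / (2 * real k)"
    and init: "\<forall>j<k. 0 < u 0 j" and t: "0 \<le> t" "t \<le> X"
  shows "0 < Psi t"
  unfolding Psi_def using lower_pos[OF X small init] t k1 by (intro sum_pos) (auto simp: lessThan_empty_iff)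

lemma Psi_cont: "continuous_on {0..X} Psi"
  unfolding Psi_def[abs_def] by (intro continuous_intros continuous_on_subset[OF ucont]) auto

lemma lower_pow:
  assumes X: "0 \<le> X" and small: "\<forall>t. 0 \<le> t \<and> t \<le> X \<longrightarrow> sqrt (ss t) < 1 / (2 * real k)"
    and init: "\<forall>j<k. 0 < u 0 j"
  shows "1 / Psi X ^ (q-2) \<le> 1 / Psi 0 ^ (q-2) - real (q-2) * kap * X"
  by (rule ode_lo_pow[OF X Psi_cont, where f' = "\<lambda>\<tau>. \<Sum>j<k. F \<tau> j"])
     (use Psi_pos[OF X small init] Psi_deriv[OF X small init] in auto)

lemma lower_exp:
  assumes X: "0 \<le> X" and small: "\<forall>t. 0 \<le> t \<and> t \<le> X \<longrightarrow> sqrt (ss t) < 1 / (2 * real k)"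
    and init: "\<forall>j<k. 0 < u 0 j" and q: "q = 2"
  shows "Psi 0 * exp (kap * X) \<le> Psi X"
  by (rule ode_lo_exp[OF X Psi_cont, where f' = "\<lambda>\<tau>. \<Sum>j<k. F \<tau> j"])
     (use Psi_deriv[OF X small init] q in auto)

lemma upper_pow:
  assumes e: "0 < e" "e \<le> 1/2" and rho: "0 < \<rho>" and X: "0 \<le> X" and s0: "ss 0 < e^2"
    and cond: "1 / e^(q-2) < 1 / sqrt (ss 0 + \<rho>)^(q-2) - real (q-2) * (KK/2) * X"
  shows "\<forall>t. 0 \<le> t \<and> t \<le> X \<longrightarrow> ss t < e^2"
proof (rule upper_generic[OF e rho X s0])
  fix t f' assume t: "0 \<le> t" "t \<le> X" and cont: "continuous_on {0..t} (\<lambda>t. sqrt (ss t + \<rho>))"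
    and pos: "\<And>\<tau>. 0 \<le> \<tau> \<Longrightarrow> \<tau> \<le> t \<Longrightarrow> sqrt (ss \<tau> + \<rho>) > 0"
    and der: "\<And>\<tau>. 0 < \<tau> \<Longrightarrow> \<tau> < t \<Longrightarrow> ((\<lambda>t. sqrt (ss t + \<rho>)) has_real_derivative f' \<tau>) (at \<tau> within {0..})
            \<and> f' \<tau> \<le> (KK/2) * sqrt (ss \<tau> + \<rho>)^(q-1)"
  have qq: "q - 2 + 1 = q - 1" using q2 by simp
  have "1 / sqrt (ss 0 + \<rho>)^(q-2) - real (q-2) * (KK/2) * t \<le> 1 / sqrt (ss t + \<rho>)^(q-2)"
    by (rule ode_up_pow[OF t(1) cont pos, where f' = f']) (use der qq in auto)
  moreover have "real (q-2) * (KK/2) * t \<le> real (q-2) * (KK/2) * X"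
    using t KK_pos by (intro mult_left_mono) auto
  ultimately have "1 / e^(q-2) < 1 / sqrt (ss t + \<rho>)^(q-2)" using cond by linarith
  moreover have "0 < sqrt (ss t + \<rho>)" using pos t by auto
  ultimately have "sqrt (ss t + \<rho>)^(q-2) < e^(q-2)" using e
    by (simp add: field_simps)
  then show "sqrt (ss t + \<rho>) < e" by (rule power_less_imp_less_base) (use e in simp)
qed

lemma upper_exp:
  assumes e: "0 < e" "e \<le> 1/2" and rho: "0 < \<rho>" and X: "0 \<le> X" and s0: "ss 0 < e^2"
    and q: "q = 2" and cond: "sqrt (ss 0 + \<rho>) * exp ((KK/2) * X) < e"
  shows "\<forall>t. 0 \<le> t \<and> t \<le> X \<longrightarrow> ss t < e^2"
proof (rule upper_generic[OF e rho X s0])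
  fix t f' assume t: "0 \<le> t" "t \<le> X" and cont: "continuous_on {0..t} (\<lambda>t. sqrt (ss t + \<rho>))"
    and pos: "\<And>\<tau>. 0 \<le> \<tau> \<Longrightarrow> \<tau> \<le> t \<Longrightarrow> sqrt (ss \<tau> + \<rho>) > 0"
    and der: "\<And>\<tau>. 0 < \<tau> \<Longrightarrow> \<tau> < t \<Longrightarrow> ((\<lambda>t. sqrt (ss t + \<rho>)) has_real_derivative f' \<tau>) (at \<tau> within {0..})
            \<and> f' \<tau> \<le> (KK/2) * sqrt (ss \<tau> + \<rho>)^(q-1)"
  have "sqrt (ss t + \<rho>) \<le> sqrt (ss 0 + \<rho>) * exp ((KK/2) * t)"
    by (rule ode_up_exp[OF t(1) cont, where f' = f']) (use der q in auto)
  also have "\<dots> \<le> sqrt (ss 0 + \<rho>) * exp ((KK/2) * X)"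
    using t KK_pos ss_nonneg[of 0] rho by (intro mult_left_mono) auto
  finally show "sqrt (ss t + \<rho>) < e" using cond by linarith
qed

end


lemma ts_eq:
  assumes "3 \<le> q" "0 < d"
  shows "time_scale q d = sqrt (real d) ^ (q-2)"
proof -
  have "real q / 2 - 1 = (1/2) * real (q-2)" using assms by (simp add: of_nat_diff)
  then have "time_scale q d = (real d powr (1/2)) powr real (q-2)"
    using assms unfolding time_scale_def by (simp only: powr_powr if_True)
  also have "\<dots> = sqrt (real d) ^ (q-2)"
  proof -
    have "real d powr (1/2) = sqrt (real d)" by (rule powr_half_sqrt) simp
    moreover have "sqrt (real d) powr real (q-2) = sqrt (real d) ^ (q-2)"
      by (rule powr_realpow) (use assms in simp)
    ultimately show ?thesis by simp
  qed
  finally show ?thesis .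
qed

lemma ts_eq2: "time_scale 2 d = ln (real d)" unfolding time_scale_def by simp

lemma dyn_inst:
  fixes c :: "nat \<Rightarrow> real"
  assumes cb: "\<And>p. \<bar>c p\<bar> \<le> Cb" and cnn: "\<And>p. 0 \<le> c p" and cz: "\<And>p. p < q \<Longrightarrow> c p = 0"
    and q2: "2 \<le> q" and cq: "0 < c q" and k1: "1 \<le> k"
    and Ann: "\<And>j j'. j < k \<Longrightarrow> j' < k \<Longrightarrow> 0 \<le> A j j'"
    and Aone: "\<And>j. j < k \<Longrightarrow> A j j = 1"
    and iv: "index_vectors k A d V" and flow: "sphere_grad_flow c k V d w"
  shows "dyn c q k A Cb (\<lambda>t j. ip d (V j) (w t))"
proof
  show "\<And>p. \<bar>c p\<bar> \<le> Cb" "\<And>p. 0 \<le> c p" "\<And>p. p < q \<Longrightarrow> c p = 0" "2 \<le> q" "0 < c q" "1 \<le> k"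
    "\<And>j j'. j < k \<Longrightarrow> j' < k \<Longrightarrow> 0 \<le> A j j'" "\<And>j. j < k \<Longrightarrow> A j j = 1"
    using assms by auto
  show "\<And>j. continuous_on {0..} (\<lambda>t. ip d (V j) (w t))" by (rule u_cont[OF flow])
  show "\<And>t j. 0 \<le> t \<Longrightarrow> (\<forall>j'<k. \<bar>ip d (V j') (w t)\<bar> \<le> 1/2) \<Longrightarrow> j < k \<Longrightarrow>
       ((\<lambda>s. ip d (V j) (w s)) has_real_derivative
          (\<Sum>j'<k. phi c (ip d (V j') (w t)) * (A j j' - ip d (V j) (w t) * ip d (V j') (w t)))) (at t within {0..})"
    by (rule u_deriv[OF flow iv _ cb]) auto
qed

lemma Mc_nonneg:
  fixes c :: "nat \<Rightarrow> real"
  assumes cb: "\<And>p. \<bar>c p\<bar> \<le> Cb" and cnn: "\<And>p. 0 \<le> c p"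
  shows "0 \<le> Mc c q"
proof -
  have "0 \<le> (\<Sum>p. c p * real p * (1/2::real)^p)"
    by (rule suminf_nonneg[OF Mc_summable[OF cb]]) (use cnn in auto)
  then show ?thesis unfolding Mc_def by simp
qed

lemma init_bounds:
  fixes u0 :: "nat \<Rightarrow> real"
  assumes d: "0 < d" and al: "0 < \<alpha>"
    and h: "\<forall>j<k. \<alpha> / sqrt (real d) \<le> u0 j \<and> u0 j \<le> \<beta> / sqrt (real d)"
  shows "(\<Sum>j<k. (u0 j)^2) \<le> real k * \<beta>^2 / real d"
    and "real k * \<alpha> / sqrt (real d) \<le> (\<Sum>j<k. u0 j)"
    and "\<forall>j<k. 0 < u0 j"
proof -
  have sd: "0 < sqrt (real d)" using d by simp
  show "\<forall>j<k. 0 < u0 j" using h al sd by (meson divide_pos_pos order_less_le_trans)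
  then have "(u0 j)^2 \<le> \<beta>^2 / real d" if "j < k" for j
  proof -
    have "(u0 j)^2 \<le> (\<beta> / sqrt (real d))^2"
      using h that \<open>\<forall>j<k. 0 < u0 j\<close> by (intro power_mono) (auto intro: less_imp_le)
    also have "\<dots> = \<beta>^2 / real d" using d by (simp add: power_divide)
    finally show ?thesis .
  qed
  then have "(\<Sum>j<k. (u0 j)^2) \<le> (\<Sum>j<k. \<beta>^2 / real d)" by (intro sum_mono) auto
  then show "(\<Sum>j<k. (u0 j)^2) \<le> real k * \<beta>^2 / real d" by simp
  have "(\<Sum>j<k. \<alpha> / sqrt (real d)) \<le> (\<Sum>j<k. u0 j)" using h by (intro sum_mono) auto
  then show "real k * \<alpha> / sqrt (real d) \<le> (\<Sum>j<k. u0 j)" by simp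
qed


lemma nat_ceiling_bound: "x < real (nat \<lceil>x\<rceil> + 1)"
proof -
  have "x \<le> real (nat \<lceil>x\<rceil>)" by (rule real_nat_ceiling_ge)
  then show ?thesis by simp
qed

lemma part2_pow:
  fixes c :: "nat \<Rightarrow> real"
  assumes cb: "\<And>p. \<bar>c p\<bar> \<le> Cb" and cnn: "\<And>p. 0 \<le> c p" and cz: "\<And>p. p < q \<Longrightarrow> c p = 0"
    and q3: "3 \<le> q" and cq: "0 < c q" and k1: "1 \<le> k"
    and Ann: "\<And>j j'. j < k \<Longrightarrow> j' < k \<Longrightarrow> 0 \<le> A j j'"
    and Aone: "\<And>j. j < k \<Longrightarrow> A j j = 1"
    and al: "0 < \<alpha>" and ab: "\<alpha> \<le> \<beta>" and ep: "0 < \<epsilon>"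
  shows "\<exists>c0>0. \<exists>D::nat. \<forall>d\<ge>D. \<forall>V w. index_vectors k A d V \<and> sphere_grad_flow c k V d w \<and>
       (\<forall>j<k. \<alpha> / sqrt (real d) \<le> ip d (V j) (w 0) \<and> ip d (V j) (w 0) \<le> \<beta> / sqrt (real d))
       \<longrightarrow> (\<forall>t. 0 \<le> t \<and> t \<le> c0 * time_scale q d \<longrightarrow> u_norm k V d (w t) < \<epsilon>)"
proof -
  define e where "e = min \<epsilon> (1/2)"
  define m where "m = q - 2"
  define B where "B = sqrt (2 * real k) * \<beta>"
  define K0 where "K0 = 2 * real k * Mc c q * ((\<Sum>j<k. \<Sum>j'<k. \<bar>A j j'\<bar>) + real k) + 1"
  have e: "0 < e" "e \<le> 1/2" "e \<le> \<epsilon>" using ep unfolding e_def by auto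
  have m1: "1 \<le> m" using q3 unfolding m_def by simp
  have q2': "2 \<le> q" using q3 by simp
  have bp: "0 < \<beta>" using al ab by simp
  have Bp: "0 < B" unfolding B_def using k1 bp by simp
  have K0p: "0 < K0" unfolding K0_def using Mc_nonneg[OF cb cnn, where q=q]
    by (intro add_nonneg_pos mult_nonneg_nonneg add_nonneg_nonneg sum_nonneg) auto
  define c0 where "c0 = 1 / (real m * K0 * B^m)"
  have c0p: "0 < c0" unfolding c0_def using m1 K0p Bp by simp
  define D where "D = nat \<lceil>real k * \<beta>^2 / e^2 + (2 * B^m / e^m)^2\<rceil> + 1"
  show ?thesis
  proof (intro exI[of _ c0] conjI c0p exI[of _ D] allI impI)
    fix d :: nat and V w and t :: real
    assume dD: "D \<le> d" and H: "index_vectors k A d V \<and> sphere_grad_flow c k V d w \<and>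
       (\<forall>j<k. \<alpha> / sqrt (real d) \<le> ip d (V j) (w 0) \<and> ip d (V j) (w 0) \<le> \<beta> / sqrt (real d))"
      and t: "0 \<le> t \<and> t \<le> c0 * time_scale q d"
    have dbig: "real k * \<beta>^2 / e^2 + (2 * B^m / e^m)^2 < real d"
      using nat_ceiling_bound[of "real k * \<beta>^2 / e^2 + (2 * B^m / e^m)^2"] dD unfolding D_def
      by (meson of_nat_le_iff order_less_le_trans)
    have d0: "0 < d" using dD unfolding D_def by simp
    define u where "u = (\<lambda>t j. ip d (V j) (w t))"
    interpret dyn c q k A Cb u
      unfolding u_def by (rule dyn_inst) (use cb cnn cz q2' cq k1 Ann Aone H in auto)
    have KK: "KK = K0" unfolding KK_def Mq_def Ab_def K0_def ..
    define \<rho> where "\<rho> = real k * \<beta>^2 / real d"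
    have \<rho>p: "0 < \<rho>" unfolding \<rho>_def using k1 bp d0 by simp
    have "ss 0 = (\<Sum>j<k. (u 0 j)^2)" by (rule ss_def)
    then have ss0: "ss 0 \<le> \<rho>" unfolding u_def \<rho>_def using init_bounds(1)[OF d0 al, of k "\<lambda>j. ip d (V j) (w 0)" \<beta>] H by auto
    have "0 \<le> (2 * B^m / e^m)^2" by simp
    then have "real k * \<beta>^2 / e^2 < real d" using dbig by linarith
    then have "\<rho> < e^2" unfolding \<rho>_def using e d0 by (simp add: field_simps)
    then have s0: "ss 0 < e^2" using ss0 by simp
    define TS where "TS = sqrt (real d) ^ m"
    have TS: "time_scale q d = TS" unfolding TS_def m_def by (rule ts_eq[OF q3 d0])
    have sd1: "1 \<le> sqrt (real d)" using d0 by simp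
    have "sqrt (real d) ^ 1 \<le> TS" unfolding TS_def by (rule power_increasing[OF m1 sd1])
    then have TSge: "sqrt (real d) \<le> TS" by simp
    have "0 \<le> real k * \<beta>^2 / e^2" by simp
    then have "(2 * B^m / e^m)^2 < real d" using dbig by linarith
    then have sdbig: "2 * B^m / e^m < sqrt (real d)" by (rule real_less_rsqrt)
    have sp: "0 < sqrt (ss 0 + \<rho>)" using ss_nonneg[of 0] \<rho>p by simp
    have "sqrt (ss 0 + \<rho>) \<le> sqrt (2 * \<rho>)" using ss0 by simp
    also have "sqrt (2 * \<rho>) = B / sqrt (real d)"
      unfolding \<rho>_def B_def using bp by (simp add: real_sqrt_mult real_sqrt_divide)
    finally have s0le: "sqrt (ss 0 + \<rho>) \<le> B / sqrt (real d)" .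
    have "TS / B^m = 1 / (B / sqrt (real d))^m"
      unfolding TS_def using Bp d0 by (simp add: power_divide)
    also have "\<dots> \<le> 1 / sqrt (ss 0 + \<rho>)^m"
      using s0le sp Bp d0 by (intro divide_left_mono power_mono mult_pos_pos zero_less_power) auto
    finally have inv: "TS / B^m \<le> 1 / sqrt (ss 0 + \<rho>)^m" .
    have eqX: "real m * (KK/2) * (c0 * TS) = TS / (2 * B^m)"
      unfolding c0_def KK using m1 K0p Bp by (simp add: field_simps)
    have "2 * B^m / e^m < TS" using sdbig TSge by linarith
    then have lt: "1 / e^m < TS / (2 * B^m)" using e Bp by (simp add: field_simps)
    have X0: "0 \<le> c0 * TS" using c0p TSge sd1 by (intro mult_nonneg_nonneg) linarith+
    have cond: "1 / e^(q-2) < 1 / sqrt (ss 0 + \<rho>)^(q-2) - real (q-2) * (KK/2) * (c0 * TS)"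
      using inv eqX lt unfolding m_def[symmetric] by (simp add: field_simps)
    have "ss t < e^2" using upper_pow[OF e(1,2) \<rho>p X0 s0 cond] t TS by auto
    then have "sqrt (ss t) < e" using e by (metis abs_of_pos real_sqrt_abs real_sqrt_less_iff)
    moreover have "u_norm k V d (w t) = sqrt (ss t)"
    proof -
      have "ss t = (\<Sum>j<k. (u t j)^2)" by (rule ss_def)
      then show ?thesis unfolding u_norm_def u_def by simp
    qed
    ultimately show "u_norm k V d (w t) < \<epsilon>" using e by simp
  qed
qed


lemma part2_exp:
  fixes c :: "nat \<Rightarrow> real"
  assumes cb: "\<And>p. \<bar>c p\<bar> \<le> Cb" and cnn: "\<And>p. 0 \<le> c p" and cz: "\<And>p. p < q \<Longrightarrow> c p = 0"
    and qeq: "q = 2" and cq: "0 < c q" and k1: "1 \<le> k"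
    and Ann: "\<And>j j'. j < k \<Longrightarrow> j' < k \<Longrightarrow> 0 \<le> A j j'"
    and Aone: "\<And>j. j < k \<Longrightarrow> A j j = 1"
    and al: "0 < \<alpha>" and ab: "\<alpha> \<le> \<beta>" and ep: "0 < \<epsilon>"
  shows "\<exists>c0>0. \<exists>D::nat. \<forall>d\<ge>D. \<forall>V w. index_vectors k A d V \<and> sphere_grad_flow c k V d w \<and>
       (\<forall>j<k. \<alpha> / sqrt (real d) \<le> ip d (V j) (w 0) \<and> ip d (V j) (w 0) \<le> \<beta> / sqrt (real d))
       \<longrightarrow> (\<forall>t. 0 \<le> t \<and> t \<le> c0 * time_scale q d \<longrightarrow> u_norm k V d (w t) < \<epsilon>)"
proof -
  define e where "e = min \<epsilon> (1/2)"
  define B where "B = sqrt (2 * real k) * \<beta>"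
  define K0 where "K0 = 2 * real k * Mc c q * ((\<Sum>j<k. \<Sum>j'<k. \<bar>A j j'\<bar>) + real k) + 1"
  have e: "0 < e" "e \<le> 1/2" "e \<le> \<epsilon>" using ep unfolding e_def by auto
  have q2': "2 \<le> q" using qeq by simp
  have bp: "0 < \<beta>" using al ab by simp
  have Bp: "0 < B" unfolding B_def using k1 bp by simp
  have K0p: "0 < K0" unfolding K0_def using Mc_nonneg[OF cb cnn, where q=q]
    by (intro add_nonneg_pos mult_nonneg_nonneg add_nonneg_nonneg sum_nonneg) auto
  define c0 where "c0 = 1 / (2 * K0)"
  have c0p: "0 < c0" unfolding c0_def using K0p by simp
  define D where "D = nat \<lceil>real k * \<beta>^2 / e^2 + (B / e)^4\<rceil> + 1"
  show ?thesis
  proof (intro exI[of _ c0] conjI c0p exI[of _ D] allI impI)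
    fix d :: nat and V w and t :: real
    assume dD: "D \<le> d" and H: "index_vectors k A d V \<and> sphere_grad_flow c k V d w \<and>
       (\<forall>j<k. \<alpha> / sqrt (real d) \<le> ip d (V j) (w 0) \<and> ip d (V j) (w 0) \<le> \<beta> / sqrt (real d))"
      and t: "0 \<le> t \<and> t \<le> c0 * time_scale q d"
    have dbig: "real k * \<beta>^2 / e^2 + (B / e)^4 < real d"
      using nat_ceiling_bound[of "real k * \<beta>^2 / e^2 + (B / e)^4"] dD unfolding D_def
      by (meson of_nat_le_iff order_less_le_trans)
    have d0: "0 < d" using dD unfolding D_def by simp
    define u where "u = (\<lambda>t j. ip d (V j) (w t))"
    interpret dyn c q k A Cb u
      unfolding u_def by (rule dyn_inst) (use cb cnn cz q2' cq k1 Ann Aone H in auto)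
    have KK: "KK = K0" unfolding KK_def Mq_def Ab_def K0_def ..
    define \<rho> where "\<rho> = real k * \<beta>^2 / real d"
    have \<rho>p: "0 < \<rho>" unfolding \<rho>_def using k1 bp d0 by simp
    have "ss 0 = (\<Sum>j<k. (u 0 j)^2)" by (rule ss_def)
    then have ss0: "ss 0 \<le> \<rho>" unfolding u_def \<rho>_def using init_bounds(1)[OF d0 al, of k "\<lambda>j. ip d (V j) (w 0)" \<beta>] H by auto
    have "0 \<le> (B / e)^4" by simp
    then have "real k * \<beta>^2 / e^2 < real d" using dbig by linarith
    then have "\<rho> < e^2" unfolding \<rho>_def using e d0 by (simp add: field_simps)
    then have s0: "ss 0 < e^2" using ss0 by simp
    have TS: "time_scale q d = ln (real d)" using qeq ts_eq2 by simp
    define r where "r = exp (ln (real d) / 4)"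
    have rp: "0 < r" unfolding r_def by simp
    have r4: "r ^ 4 = real d" unfolding r_def using d0 exp_divide_power_eq[of 4 "ln (real d)"] by simp
    have sdr: "sqrt (real d) = r^2"
    proof -
      have "real d = (r^2)^2" using r4 by simp
      then have "sqrt (real d) = sqrt ((r^2)^2)" by simp
      also have "\<dots> = r^2" by (rule real_sqrt_unique) simp_all
      finally show ?thesis .
    qed
    have "0 \<le> real k * \<beta>^2 / e^2" by simp
    then have "(B / e)^4 < r^4" using dbig r4 by linarith
    then have rbig: "B / e < r" by (rule power_less_imp_less_base) (use rp in simp)
    have X0: "0 \<le> c0 * ln (real d)" using c0p d0 by simp
    have sp: "0 < sqrt (ss 0 + \<rho>)" using ss_nonneg[of 0] \<rho>p by simp
    have "sqrt (ss 0 + \<rho>) \<le> sqrt (2 * \<rho>)" using ss0 by simp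
    also have "sqrt (2 * \<rho>) = B / sqrt (real d)"
      unfolding \<rho>_def B_def using bp by (simp add: real_sqrt_mult real_sqrt_divide)
    finally have s0le: "sqrt (ss 0 + \<rho>) \<le> B / sqrt (real d)" .
    have ex: "exp ((KK/2) * (c0 * ln (real d))) = r"
      unfolding r_def c0_def KK using K0p by (simp add: field_simps)
    have "sqrt (ss 0 + \<rho>) * exp ((KK/2) * (c0 * ln (real d))) \<le> B / sqrt (real d) * r"
      unfolding ex using s0le rp by (intro mult_right_mono) auto
    also have "B / sqrt (real d) * r = B / r" unfolding sdr using rp by (simp add: power2_eq_square)
    also have "B / r < e" using rbig rp e by (simp add: field_simps)
    finally have cond: "sqrt (ss 0 + \<rho>) * exp ((KK/2) * (c0 * ln (real d))) < e" .
    have "ss t < e^2" using upper_exp[OF e(1,2) \<rho>p X0 s0 qeq cond] t TS by auto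
    then have "sqrt (ss t) < e" using e by (metis abs_of_pos real_sqrt_abs real_sqrt_less_iff)
    moreover have "u_norm k V d (w t) = sqrt (ss t)"
    proof -
      have "ss t = (\<Sum>j<k. (u t j)^2)" by (rule ss_def)
      then show ?thesis unfolding u_norm_def u_def by simp
    qed
    ultimately show "u_norm k V d (w t) < \<epsilon>" using e by simp
  qed
qed


lemma part1_pow:
  fixes c :: "nat \<Rightarrow> real"
  assumes cb: "\<And>p. \<bar>c p\<bar> \<le> Cb" and cnn: "\<And>p. 0 \<le> c p" and cz: "\<And>p. p < q \<Longrightarrow> c p = 0"
    and q3: "3 \<le> q" and cq: "0 < c q" and k1: "1 \<le> k"
    and Ann: "\<And>j j'. j < k \<Longrightarrow> j' < k \<Longrightarrow> 0 \<le> A j j'"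
    and Aone: "\<And>j. j < k \<Longrightarrow> A j j = 1"
    and al: "0 < \<alpha>"
  shows "\<exists>C>0. \<exists>\<epsilon>>0. \<exists>D::nat. \<forall>d\<ge>D. \<forall>V w. index_vectors k A d V \<and> sphere_grad_flow c k V d w \<and>
       (\<forall>j<k. \<alpha> / sqrt (real d) \<le> ip d (V j) (w 0) \<and> ip d (V j) (w 0) \<le> \<beta> / sqrt (real d))
       \<longrightarrow> (\<exists>T. 0 \<le> T \<and> T \<le> C * time_scale q d \<and> \<epsilon> \<le> u_norm k V d (w T))"
proof -
  define m where "m = q - 2"
  have m1: "1 \<le> m" using q3 unfolding m_def by simp
  have q2': "2 \<le> q" using q3 by simp
  define \<kappa>0 where "\<kappa>0 = c q * real q / (2 * real k ^ (q-1))"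
  have k0p: "0 < \<kappa>0" unfolding \<kappa>0_def using cq q3 k1 by (intro divide_pos_pos mult_pos_pos) auto
  define C where "C = (1 / (real k * \<alpha>)^m + 1) / (real m * \<kappa>0)"
  have Cp: "0 < C" unfolding C_def using k0p m1 k1 al by (intro divide_pos_pos add_nonneg_pos mult_pos_pos) auto
  define \<epsilon>0 where "\<epsilon>0 = 1 / (2 * real k)"
  have e0: "0 < \<epsilon>0" unfolding \<epsilon>0_def using k1 by simp
  show ?thesis
  proof (rule exI[of _ C], intro conjI Cp, rule exI[of _ \<epsilon>0], intro conjI e0, rule exI[of _ "1::nat"], intro allI impI)
    fix d :: nat and V w
    assume d1: "1 \<le> d" and H: "index_vectors k A d V \<and> sphere_grad_flow c k V d w \<and>
       (\<forall>j<k. \<alpha> / sqrt (real d) \<le> ip d (V j) (w 0) \<and> ip d (V j) (w 0) \<le> \<beta> / sqrt (real d))"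
    have d0: "0 < d" using d1 by simp
    define u where "u = (\<lambda>t j. ip d (V j) (w t))"
    interpret dyn c q k A Cb u
      unfolding u_def by (rule dyn_inst) (use cb cnn cz q2' cq k1 Ann Aone H in auto)
    have kap: "kap = \<kappa>0" unfolding kap_def \<kappa>0_def ..
    have un: "u_norm k V d (w t) = sqrt (ss t)" for t
    proof -
      have "ss t = (\<Sum>j<k. (u t j)^2)" by (rule ss_def)
      then show ?thesis unfolding u_norm_def u_def by simp
    qed
    define TS where "TS = sqrt (real d) ^ m"
    have TS: "time_scale q d = TS" unfolding TS_def m_def by (rule ts_eq[OF q3 d0])
    have sd1: "1 \<le> sqrt (real d)" using d0 by simp
    have TS1: "1 \<le> TS" unfolding TS_def using sd1 by (simp add: one_le_power)
    define X where "X = C * TS"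
    have X0: "0 \<le> X" unfolding X_def using Cp TS1 by simp
    show "\<exists>T. 0 \<le> T \<and> T \<le> C * time_scale q d \<and> \<epsilon>0 \<le> u_norm k V d (w T)"
    proof (rule ccontr)
      assume neg: "\<not> ?thesis"
      have small: "\<forall>t. 0 \<le> t \<and> t \<le> X \<longrightarrow> sqrt (ss t) < 1 / (2 * real k)"
        using neg un unfolding X_def TS \<epsilon>0_def by (auto simp: not_le) (meson not_less)
      have init: "\<forall>j<k. 0 < u 0 j" unfolding u_def using init_bounds(3)[OF d0 al, of k "\<lambda>j. ip d (V j) (w 0)" \<beta>] H by auto
      have "Psi 0 = (\<Sum>j<k. u 0 j)" by (rule Psi_def)
      then have P0: "real k * \<alpha> / sqrt (real d) \<le> Psi 0"
        unfolding u_def using init_bounds(2)[OF d0 al, of k "\<lambda>j. ip d (V j) (w 0)" \<beta>] H by auto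
      have kap_pos: "0 < real k * \<alpha> / sqrt (real d)" using k1 al d0 by simp
      have "1 / Psi 0 ^ m \<le> 1 / (real k * \<alpha> / sqrt (real d)) ^ m"
        using P0 kap_pos by (intro divide_left_mono power_mono mult_pos_pos zero_less_power) auto
      also have "\<dots> = TS / (real k * \<alpha>)^m" unfolding TS_def by (simp add: power_divide)
      finally have i0: "1 / Psi 0 ^ m \<le> TS / (real k * \<alpha>)^m" .
      have "real m * kap * X = (1 / (real k * \<alpha>)^m + 1) * TS"
        unfolding X_def C_def kap using m1 k0p by (simp add: field_simps)
      then have "1 / Psi 0 ^ m - real m * kap * X \<le> - TS"
        using i0 by (simp add: field_simps)
      moreover have "1 / Psi X ^ (q-2) \<le> 1 / Psi 0 ^ (q-2) - real (q-2) * kap * X"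
        by (rule lower_pow[OF X0 small init])
      moreover have "0 < Psi X" by (rule Psi_pos[OF X0 small init]) (use X0 in auto)
      ultimately show False using TS1 unfolding m_def
        by (smt (verit) divide_pos_pos zero_less_power)
    qed
  qed
qed

lemma part1_exp:
  fixes c :: "nat \<Rightarrow> real"
  assumes cb: "\<And>p. \<bar>c p\<bar> \<le> Cb" and cnn: "\<And>p. 0 \<le> c p" and cz: "\<And>p. p < q \<Longrightarrow> c p = 0"
    and qeq: "q = 2" and cq: "0 < c q" and k1: "1 \<le> k"
    and Ann: "\<And>j j'. j < k \<Longrightarrow> j' < k \<Longrightarrow> 0 \<le> A j j'"
    and Aone: "\<And>j. j < k \<Longrightarrow> A j j = 1"
    and al: "0 < \<alpha>"
  shows "\<exists>C>0. \<exists>\<epsilon>>0. \<exists>D::nat. \<forall>d\<ge>D. \<forall>V w. index_vectors k A d V \<and> sphere_grad_flow c k V d w \<and>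
       (\<forall>j<k. \<alpha> / sqrt (real d) \<le> ip d (V j) (w 0) \<and> ip d (V j) (w 0) \<le> \<beta> / sqrt (real d))
       \<longrightarrow> (\<exists>T. 0 \<le> T \<and> T \<le> C * time_scale q d \<and> \<epsilon> \<le> u_norm k V d (w T))"
proof -
  have q2': "2 \<le> q" using qeq by simp
  define \<kappa>0 where "\<kappa>0 = c q * real q / (2 * real k ^ (q-1))"
  have k0p: "0 < \<kappa>0" unfolding \<kappa>0_def using cq qeq k1 by (intro divide_pos_pos mult_pos_pos) auto
  define C where "C = 1 / \<kappa>0"
  have Cp: "0 < C" unfolding C_def using k0p by simp
  define \<epsilon>0 where "\<epsilon>0 = 1 / (2 * real k)"
  have e0: "0 < \<epsilon>0" unfolding \<epsilon>0_def using k1 by simp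
  define D where "D = nat \<lceil>(1 / (2 * real k * \<alpha>))^2\<rceil> + 1"
  show ?thesis
  proof (rule exI[of _ C], intro conjI Cp, rule exI[of _ \<epsilon>0], intro conjI e0, rule exI[of _ D], intro allI impI)
    fix d :: nat and V w
    assume dD: "D \<le> d" and H: "index_vectors k A d V \<and> sphere_grad_flow c k V d w \<and>
       (\<forall>j<k. \<alpha> / sqrt (real d) \<le> ip d (V j) (w 0) \<and> ip d (V j) (w 0) \<le> \<beta> / sqrt (real d))"
    have dbig: "(1 / (2 * real k * \<alpha>))^2 < real d"
      using nat_ceiling_bound[of "(1 / (2 * real k * \<alpha>))^2"] dD unfolding D_def
      by (meson of_nat_le_iff order_less_le_trans)
    have d0: "0 < d" using dD unfolding D_def by simp
    define u where "u = (\<lambda>t j. ip d (V j) (w t))"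
    interpret dyn c q k A Cb u
      unfolding u_def by (rule dyn_inst) (use cb cnn cz q2' cq k1 Ann Aone H in auto)
    have kap: "kap = \<kappa>0" unfolding kap_def \<kappa>0_def ..
    have un: "u_norm k V d (w t) = sqrt (ss t)" for t
    proof -
      have "ss t = (\<Sum>j<k. (u t j)^2)" by (rule ss_def)
      then show ?thesis unfolding u_norm_def u_def by simp
    qed
    have TS: "time_scale q d = ln (real d)" using qeq ts_eq2 by simp
    define X where "X = C * ln (real d)"
    have X0: "0 \<le> X" unfolding X_def using Cp d0 by simp
    show "\<exists>T. 0 \<le> T \<and> T \<le> C * time_scale q d \<and> \<epsilon>0 \<le> u_norm k V d (w T)"
    proof (rule ccontr)
      assume neg: "\<not> ?thesis"
      have small: "\<forall>t. 0 \<le> t \<and> t \<le> X \<longrightarrow> sqrt (ss t) < 1 / (2 * real k)"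
        using neg un unfolding X_def TS \<epsilon>0_def by (auto simp: not_le) (meson not_less)
      have init: "\<forall>j<k. 0 < u 0 j" unfolding u_def using init_bounds(3)[OF d0 al, of k "\<lambda>j. ip d (V j) (w 0)" \<beta>] H by auto
      have "Psi 0 = (\<Sum>j<k. u 0 j)" by (rule Psi_def)
      then have P0: "real k * \<alpha> / sqrt (real d) \<le> Psi 0"
        unfolding u_def using init_bounds(2)[OF d0 al, of k "\<lambda>j. ip d (V j) (w 0)" \<beta>] H by auto
      have "exp (kap * X) = real d" unfolding X_def C_def kap using k0p d0 by simp
      then have "Psi 0 * real d \<le> Psi X" using lower_exp[OF X0 small init qeq] by simp
      moreover have "real k * \<alpha> / sqrt (real d) * real d \<le> Psi 0 * real d"
        using P0 by (intro mult_right_mono) auto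
      moreover have "real k * \<alpha> / sqrt (real d) * real d = real k * \<alpha> * sqrt (real d)"
        using d0 by (simp add: field_simps)
      moreover have "1 / 2 < real k * \<alpha> * sqrt (real d)"
      proof -
        have "1 / (2 * real k * \<alpha>) < sqrt (real d)" by (rule real_less_rsqrt[OF dbig])
        then show ?thesis using k1 al by (simp add: field_simps)
      qed
      moreover have "Psi X \<le> 1/2"
      proof -
        have "\<forall>j'<k. \<bar>u X j'\<bar> \<le> 1 / (2 * real k)" by (rule small_reg(1)) (use small X0 in auto)
        then have "Psi X \<le> (\<Sum>j<k. 1 / (2 * real k))" unfolding Psi_def by (intro sum_mono) force
        then show ?thesis using k1 by simp
      qed
      ultimately show False by linarith
    qed
  qed
qed


lemma abs_prod_le: "\<bar>x * y\<bar> \<le> (x^2 + y^2) / (2::real)"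
proof -
  have "0 \<le> (\<bar>x\<bar> - \<bar>y\<bar>)^2" by simp
  then show ?thesis by (simp add: power2_eq_square abs_mult algebra_simps)
qed

theorem theorem1:
  fixes k :: nat and A :: "nat \<Rightarrow> nat \<Rightarrow> real" and a b :: "nat \<Rightarrow> real"
    and \<alpha> \<beta> :: real
  assumes k_pos: "1 \<le> k"
    and A_sym: "\<forall>j<k. \<forall>j'<k. A j j' = A j' j"
    and A_unit: "\<forall>j<k. A j j = 1"
    and A_nonneg: "\<forall>j<k. \<forall>j'<k. 0 \<le> A j j'"
    and a0: "a 0 = 0" and b0: "b 0 = 0"
    and a_L2: "summable (\<lambda>p. (a p)\<^sup>2)" and b_L2: "summable (\<lambda>p. (b p)\<^sup>2)"
    and c_pstar: "coef_c a b (info_exp b) > 0"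
    and c_nonneg: "\<forall>p\<ge>info_exp b. coef_c a b p \<ge> 0"
    and c_summ: "summable (\<lambda>p. coef_c a b p * real p * lambda_max k A powr (real p / 2))"
    and pstar_ge2: "2 \<le> info_exp b"
    and alpha_pos: "0 < \<alpha>" and alpha_le_beta: "\<alpha> \<le> \<beta>"
  shows
   "(\<exists>C>0. \<exists>\<epsilon>>0. \<exists>D. \<forall>d\<ge>D. \<forall>V w.
       index_vectors k A d V \<and> sphere_grad_flow (coef_c a b) k V d w \<and>
       (\<forall>j<k. \<alpha> / sqrt (real d) \<le> ip d (V j) (w 0) \<and> ip d (V j) (w 0) \<le> \<beta> / sqrt (real d))
       \<longrightarrow> (\<exists>T. 0 \<le> T \<and> T \<le> C * time_scale (info_exp b) d \<and> \<epsilon> \<le> u_norm k V d (w T)))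
    \<and>
    (\<forall>\<epsilon>>0. \<exists>c>0. \<exists>D. \<forall>d\<ge>D. \<forall>V w.
       index_vectors k A d V \<and> sphere_grad_flow (coef_c a b) k V d w \<and>
       (\<forall>j<k. \<alpha> / sqrt (real d) \<le> ip d (V j) (w 0) \<and> ip d (V j) (w 0) \<le> \<beta> / sqrt (real d))
       \<longrightarrow> (\<forall>t. 0 \<le> t \<and> t \<le> c * time_scale (info_exp b) d \<longrightarrow> u_norm k V d (w t) < \<epsilon>))"
proof -
  let ?c = "coef_c a b" and ?q = "info_exp b"
  have bz: "b p = 0" if "p < ?q" for p
  proof (cases "p = 0")
    case True then show ?thesis using b0 by simp
  next
    case False
    show ?thesis
    proof (rule ccontr)
      assume "b p \<noteq> 0"
      then have "?q \<le> p" unfolding info_exp_def using False by (intro Least_le) simp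
      then show False using that by simp
    qed
  qed
  have cz: "\<And>p. p < ?q \<Longrightarrow> ?c p = 0" unfolding coef_c_def using bz by simp
  have cnn: "\<And>p. 0 \<le> ?c p"
  proof -
    fix p show "0 \<le> ?c p" using cz[of p] c_nonneg by (cases "p < ?q") auto
  qed
  define Cb where "Cb = ((\<Sum>p. (a p)^2) + (\<Sum>p. (b p)^2)) / 2"
  have cb: "\<And>p. \<bar>?c p\<bar> \<le> Cb"
  proof -
    fix p
    have "sum (\<lambda>p. (a p)^2) {p} \<le> (\<Sum>p. (a p)^2)" by (rule sum_le_suminf[OF a_L2]) auto
    moreover have "sum (\<lambda>p. (b p)^2) {p} \<le> (\<Sum>p. (b p)^2)" by (rule sum_le_suminf[OF b_L2]) auto
    ultimately show "\<bar>?c p\<bar> \<le> Cb" unfolding Cb_def coef_c_def using abs_prod_le[of "a p" "b p"] by simp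
  qed
  have k1: "1 \<le> k" by (rule k_pos)
  have Ann: "\<And>j j'. j < k \<Longrightarrow> j' < k \<Longrightarrow> 0 \<le> A j j'" using A_nonneg by auto
  have Aone: "\<And>j. j < k \<Longrightarrow> A j j = 1" using A_unit by auto
  show ?thesis
  proof (cases "3 \<le> ?q")
    case True
    show ?thesis
    proof
      show "\<exists>C>0. \<exists>\<epsilon>>0. \<exists>D. \<forall>d\<ge>D. \<forall>V w.
       index_vectors k A d V \<and> sphere_grad_flow ?c k V d w \<and>
       (\<forall>j<k. \<alpha> / sqrt (real d) \<le> ip d (V j) (w 0) \<and> ip d (V j) (w 0) \<le> \<beta> / sqrt (real d))
       \<longrightarrow> (\<exists>T. 0 \<le> T \<and> T \<le> C * time_scale ?q d \<and> \<epsilon> \<le> u_norm k V d (w T))"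
        by (rule part1_pow[where c = ?c and q = ?q and Cb = Cb]) (use cb cnn cz True c_pstar k1 Ann Aone alpha_pos in auto)
      show "\<forall>\<epsilon>>0. \<exists>c>0. \<exists>D. \<forall>d\<ge>D. \<forall>V w.
       index_vectors k A d V \<and> sphere_grad_flow ?c k V d w \<and>
       (\<forall>j<k. \<alpha> / sqrt (real d) \<le> ip d (V j) (w 0) \<and> ip d (V j) (w 0) \<le> \<beta> / sqrt (real d))
       \<longrightarrow> (\<forall>t. 0 \<le> t \<and> t \<le> c * time_scale ?q d \<longrightarrow> u_norm k V d (w t) < \<epsilon>)"
      proof (intro allI impI)
        fix \<epsilon> :: real assume ep: "0 < \<epsilon>"
        show "\<exists>c>0. \<exists>D. \<forall>d\<ge>D. \<forall>V w.
         index_vectors k A d V \<and> sphere_grad_flow ?c k V d w \<and>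
         (\<forall>j<k. \<alpha> / sqrt (real d) \<le> ip d (V j) (w 0) \<and> ip d (V j) (w 0) \<le> \<beta> / sqrt (real d))
         \<longrightarrow> (\<forall>t. 0 \<le> t \<and> t \<le> c * time_scale ?q d \<longrightarrow> u_norm k V d (w t) < \<epsilon>)"
          by (rule part2_pow[where c = ?c and q = ?q and Cb = Cb]) (use cb cnn cz True c_pstar k1 Ann Aone alpha_pos alpha_le_beta ep in auto)
      qed
    qed
  next
    case False
    then have qeq: "?q = 2" using pstar_ge2 by simp
    show ?thesis
    proof
      show "\<exists>C>0. \<exists>\<epsilon>>0. \<exists>D. \<forall>d\<ge>D. \<forall>V w.
       index_vectors k A d V \<and> sphere_grad_flow ?c k V d w \<and>
       (\<forall>j<k. \<alpha> / sqrt (real d) \<le> ip d (V j) (w 0) \<and> ip d (V j) (w 0) \<le> \<beta> / sqrt (real d))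
       \<longrightarrow> (\<exists>T. 0 \<le> T \<and> T \<le> C * time_scale ?q d \<and> \<epsilon> \<le> u_norm k V d (w T))"
        by (rule part1_exp[where c = ?c and q = ?q and Cb = Cb]) (use cb cnn cz qeq c_pstar k1 Ann Aone alpha_pos in auto)
      show "\<forall>\<epsilon>>0. \<exists>c>0. \<exists>D. \<forall>d\<ge>D. \<forall>V w.
       index_vectors k A d V \<and> sphere_grad_flow ?c k V d w \<and>
       (\<forall>j<k. \<alpha> / sqrt (real d) \<le> ip d (V j) (w 0) \<and> ip d (V j) (w 0) \<le> \<beta> / sqrt (real d))
       \<longrightarrow> (\<forall>t. 0 \<le> t \<and> t \<le> c * time_scale ?q d \<longrightarrow> u_norm k V d (w t) < \<epsilon>)"
      proof (intro allI impI)
        fix \<epsilon> :: real assume ep: "0 < \<epsilon>"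
        show "\<exists>c>0. \<exists>D. \<forall>d\<ge>D. \<forall>V w.
         index_vectors k A d V \<and> sphere_grad_flow ?c k V d w \<and>
         (\<forall>j<k. \<alpha> / sqrt (real d) \<le> ip d (V j) (w 0) \<and> ip d (V j) (w 0) \<le> \<beta> / sqrt (real d))
         \<longrightarrow> (\<forall>t. 0 \<le> t \<and> t \<le> c * time_scale ?q d \<longrightarrow> u_norm k V d (w t) < \<epsilon>)"
          by (rule part2_exp[where c = ?c and q = ?q and Cb = Cb]) (use cb cnn cz qeq c_pstar k1 Ann Aone alpha_pos alpha_le_beta ep in auto)
      qed
    qed
  qed
qed

end
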